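(* For every FEE problem $(I,O,\succsim_I,\omega)$ and every FTTC mechanism on the full preference domain, the output assignment $p$ is individually rational (i.e., $p_i\succsim^{sd}_i\omega_i$ for all $i\in I$) and sd-efficient (no assignment strictly stochastically dominates $p$).
   Context: Fractional endowment exchange (FEE) problem: a tuple $(I,O,\succsim_I,\omega)$ where $I$ is a finite set of agents, $O$ a finite set of objects, each agent $i$ has a complete and transitive (possibly non-strict) preference relation $\succsim_i$ over $O$ with asymmetric part $\succ_i$ and symmetric part $\sim_i$, and $\omega=(\omega_{i,o})_{i\in I,o\in O}$ is an endowment matrix with $\omega_{i,o}\in[0,1]$, $\sum_{o\in O}\omega_{i,o}\le 1$ for each $i$, and $q_o=\sum_{i\in I}\omega_{i,o}$ an integer for each $o$. An assignment is a nonnegative matrix $p=(p_{i,o})$ with $\sum_i p_{i,o}\le q_o$ for all $o$ and $\sum_o p_{i,o}\le 1$ for all $i$; $p_i=(p_{i,o})_{o\in O}$ is $i$'s lottery. Stochastic dominance: for vectors $l,l'\in\mathbb R^{O}_+$, $l\succsim^{sd}_i l'$ if $\sum_{o'\succsim_i o}l_{o'}\ge\sum_{o'\succsim_i o}l'_{o'}$ for all $o\in O$, strictly ($\succ^{sd}_i$) if moreover some inequality is strict. An assignment $p$ strictly stochastically dominates $p'$ if $p_i\succsim^{sd}_ip'_i$ for all $i$ and $p_j\succ^{sd}_jp'_j$ for some $j$. FTTC (Fractional Top Trading Cycle) on the full preference domain. Initialize $\omega(0)=\omega$, $p(0)=0$, $O(0)=O$. At step $d\ge1$ (with $O(d-1)\ne\emptyset$):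 (i) Labeling. Put $T_0=O(d-1)$. For $k=1,2,\dots$: let $L_k$ be the set of agents $i\notin L_1\cup\dots\cup L_{k-1}$ for which there exist $o\in T_{k-1}$ and $o'\in O\setminus(T_0\cup\dots\cup T_{k-1})$ with $p_{i,o'}(d-1)>0$ and $o\sim_i o'$; for $i\in L_k$ let $\tilde O_i(d-1)$ be the set of all such $o'$ for this $i$, and let $T_k=\bigcup_{i\in L_k}\tilde O_i(d-1)$. Stop at the first $k$ with $L_k=\emptyset$. Set $L(d-1)=\bigcup_k L_k$, $\tilde O(d-1)=\bigcup_{k\ge1}T_k$, $\overline{O}(d-1)=O(d-1)\cup\tilde O(d-1)$, and $\tilde O_i(d-1)=\emptyset$ for $i\notin L(d-1)$. (ii) Pointing. The active agents are $I(d-1)=L(d-1)\cup\{i\in I:\sum_o\omega_{i,o}(d-1)>0\}$. For $i\in I(d-1)$ let $B_i$ be the set of $\succsim_i$-maximal elements of $\overline{O}(d-1)$, let $k_i$ be the least $k\ge0$ with $B_i\cap T_k\ne\emptyset$, and let $A_i(d)=B_i\cap T_{k_i}$. (iii) Trading. The mechanism chooses (possibly depending on the history): a ratio matrix $\lambda(d)=(\lambda_{i,o}(d))_{i\in I(d-1),o\in\overline{O}(d-1)}$, nonnegative, with $\sum_{i\in I(d-1)}\lambda_{i,o}(d)=1$ for each $o\in\overline O(d-1)$, $\lambda_{i,o}(d)>0$ only if $\omega_{i,o}(d-1)>0$ (for $o\in O(d-1)$) and only if $o\in\tilde O_i(d-1)$ (for $o\in\tilde O(d-1)$); a quota matrix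 $\beta(d)$ on $I(d-1)\times O(d-1)$ with $0\le\beta_{i,o}(d)\le\omega_{i,o}(d-1)$; a division matrix $\gamma(d)$ on $I(d-1)\times\overline O(d-1)$, nonnegative, with $\sum_o\gamma_{i,o}(d)=1$ and $\gamma_{i,o}(d)>0$ only if $o\in A_i(d)$. Let $x^*(d)=(x^*_a(d))_{a\in I(d-1)\cup\overline O(d-1)}$ be the maximum (componentwise largest) nonnegative solution of $x_o=\sum_{i\in I(d-1)}\gamma_{i,o}(d)x_i$ for all $o\in\overline O(d-1)$ and $x_i=\sum_{o\in\overline O(d-1)}\lambda_{i,o}(d)x_o$ for all $i\in I(d-1)$, subject to $\lambda_{i,o}(d)x_o\le\beta_{i,o}(d)$ for $o\in O(d-1)$ and $\lambda_{i,o}(d)x_o\le p_{i,o}(d-1)$ for $o\in\tilde O(d-1)$. For $i\in I(d-1)$: $\omega_{i,o}(d)=\omega_{i,o}(d-1)-\lambda_{i,o}(d)x^*_o(d)$ if $o\in O(d-1)$ and $0$ otherwise; $p_{i,o}(d)=p_{i,o}(d-1)-\mathbf 1[o\in\tilde O_i(d-1)]\lambda_{i,o}(d)x^*_o(d)+\gamma_{i,o}(d)x^*_i(d)$ (with $\gamma_{i,o}(d)=0$ for $o\notin\overline O(d-1)$). For $i\notin I(d-1)$, $\omega_i(d)=\omega_i(d-1)$, $p_i(d)=p_i(d-1)$. Let $O(d)=\{o\in O(d-1):\sum_i\omega_{i,o}(d)>0\}$. If $O(d)=\emptyset$ stop and output $p(d)$; otherwise go to step $d+1$. (Standing assumption: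 the maximum solution exists at each step and the procedure ends after finitely many steps.) An FTTC mechanism is specified by a rule choosing $\lambda(d),\beta(d),\gamma(d)$ at every step. *)

theory Defs
  imports Complex_Main
begin

(* Preferences: R i a b means  a \<succsim>_i b.  Agents have type 'i, objects type 'o.
   The finite sets of agents and objects are I and Os. *)

definition indiff :: "('i \<Rightarrow> 'o \<Rightarrow> 'o \<Rightarrow> bool) \<Rightarrow> 'i \<Rightarrow> 'o \<Rightarrow> 'o \<Rightarrow> bool" where
  "indiff R i a b \<longleftrightarrow> R i a b \<and> R i b a"

definition fee_problem ::
  "'i set \<Rightarrow> 'o set \<Rightarrow> ('i \<Rightarrow> 'o \<Rightarrow> 'o \<Rightarrow> bool) \<Rightarrow> ('i \<Rightarrow> 'o \<Rightarrow> real) \<Rightarrow> bool" where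
  "fee_problem I Os R \<omega> \<longleftrightarrow>
     finite I \<and> finite Os \<and>
     (\<forall>i\<in>I. (\<forall>a\<in>Os. \<forall>b\<in>Os. R i a b \<or> R i b a) \<and>
             (\<forall>a\<in>Os. \<forall>b\<in>Os. \<forall>c\<in>Os. R i a b \<longrightarrow> R i b c \<longrightarrow> R i a c)) \<and>
     (\<forall>i\<in>I. \<forall>ob\<in>Os. 0 \<le> \<omega> i ob \<and> \<omega> i ob \<le> 1) \<and>
     (\<forall>i\<in>I. (\<Sum>ob\<in>Os. \<omega> i ob) \<le> 1) \<and>
     (\<forall>ob\<in>Os. (\<Sum>i\<in>I. \<omega> i ob) \<in> \<int>)"

definition quota :: "'i set \<Rightarrow> ('i \<Rightarrow> 'o \<Rightarrow> real) \<Rightarrow> 'o \<Rightarrow> real" where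
  "quota I \<omega> ob = (\<Sum>i\<in>I. \<omega> i ob)"

definition is_assignment ::
  "'i set \<Rightarrow> 'o set \<Rightarrow> ('i \<Rightarrow> 'o \<Rightarrow> real) \<Rightarrow> ('i \<Rightarrow> 'o \<Rightarrow> real) \<Rightarrow> bool" where
  "is_assignment I Os \<omega> p \<longleftrightarrow>
     (\<forall>i\<in>I. \<forall>ob\<in>Os. 0 \<le> p i ob) \<and>
     (\<forall>ob\<in>Os. (\<Sum>i\<in>I. p i ob) \<le> quota I \<omega> ob) \<and>
     (\<forall>i\<in>I. (\<Sum>ob\<in>Os. p i ob) \<le> 1)"

definition sd_geq ::
  "'o set \<Rightarrow> ('i \<Rightarrow> 'o \<Rightarrow> 'o \<Rightarrow> bool) \<Rightarrow> 'i \<Rightarrow> ('o \<Rightarrow> real) \<Rightarrow> ('o \<Rightarrow> real) \<Rightarrow> bool" where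
  "sd_geq Os R i l l' \<longleftrightarrow>
     (\<forall>ob\<in>Os. (\<Sum>ob'\<in>{ob'\<in>Os. R i ob' ob}. l ob') \<ge> (\<Sum>ob'\<in>{ob'\<in>Os. R i ob' ob}. l' ob'))"

definition sd_gt ::
  "'o set \<Rightarrow> ('i \<Rightarrow> 'o \<Rightarrow> 'o \<Rightarrow> bool) \<Rightarrow> 'i \<Rightarrow> ('o \<Rightarrow> real) \<Rightarrow> ('o \<Rightarrow> real) \<Rightarrow> bool" where
  "sd_gt Os R i l l' \<longleftrightarrow> sd_geq Os R i l l' \<and>
     (\<exists>ob\<in>Os. (\<Sum>ob'\<in>{ob'\<in>Os. R i ob' ob}. l ob') > (\<Sum>ob'\<in>{ob'\<in>Os. R i ob' ob}. l' ob'))"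

definition sd_dominates ::
  "'i set \<Rightarrow> 'o set \<Rightarrow> ('i \<Rightarrow> 'o \<Rightarrow> 'o \<Rightarrow> bool) \<Rightarrow> ('i \<Rightarrow> 'o \<Rightarrow> real) \<Rightarrow> ('i \<Rightarrow> 'o \<Rightarrow> real) \<Rightarrow> bool" where
  "sd_dominates I Os R p p' \<longleftrightarrow>
     (\<forall>i\<in>I. sd_geq Os R i (p i) (p' i)) \<and> (\<exists>j\<in>I. sd_gt Os R j (p j) (p' j))"

definition individually_rational ::
  "'i set \<Rightarrow> 'o set \<Rightarrow> ('i \<Rightarrow> 'o \<Rightarrow> 'o \<Rightarrow> bool) \<Rightarrow> ('i \<Rightarrow> 'o \<Rightarrow> real) \<Rightarrow> ('i \<Rightarrow> 'o \<Rightarrow> real) \<Rightarrow> bool" where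
  "individually_rational I Os R \<omega> p \<longleftrightarrow> (\<forall>i\<in>I. sd_geq Os R i (p i) (\<omega> i))"

definition sd_efficient ::
  "'i set \<Rightarrow> 'o set \<Rightarrow> ('i \<Rightarrow> 'o \<Rightarrow> 'o \<Rightarrow> bool) \<Rightarrow> ('i \<Rightarrow> 'o \<Rightarrow> real) \<Rightarrow> ('i \<Rightarrow> 'o \<Rightarrow> real) \<Rightarrow> bool" where
  "sd_efficient I Os R \<omega> p \<longleftrightarrow> is_assignment I Os \<omega> p \<and>
     \<not> (\<exists>p'. is_assignment I Os \<omega> p' \<and> sd_dominates I Os R p' p)"

(* \<tilde>O_i contribution at a labeling level: objects ob' outside U (= T_0 \<union> ... \<union> T_{k-1})
   with p_{i,ob'} > 0 that are indifferent to some ob in Tprev (= T_{k-1}) *)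
definition lab_objs ::
  "('i \<Rightarrow> 'o \<Rightarrow> 'o \<Rightarrow> bool) \<Rightarrow> 'o set \<Rightarrow> ('i \<Rightarrow> 'o \<Rightarrow> real) \<Rightarrow> 'i \<Rightarrow> 'o set \<Rightarrow> 'o set \<Rightarrow> 'o set" where
  "lab_objs R Os p i Tprev U = {ob'\<in>Os - U. p i ob' > 0 \<and> (\<exists>ob\<in>Tprev. indiff R i ob ob')}"

(* labeling: lab k = (T_k, L_k, T_0 \<union> ... \<union> T_k, L_1 \<union> ... \<union> L_k), with L_0 = {} *)
fun lab ::
  "'i set \<Rightarrow> 'o set \<Rightarrow> ('i \<Rightarrow> 'o \<Rightarrow> 'o \<Rightarrow> bool) \<Rightarrow> ('i \<Rightarrow> 'o \<Rightarrow> real) \<Rightarrow> 'o set \<Rightarrow> nat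
   \<Rightarrow> 'o set \<times> 'i set \<times> 'o set \<times> 'i set" where
  "lab I Os R p Od 0 = (Od, {}, Od, {})"
| "lab I Os R p Od (Suc k) =
     (case lab I Os R p Od k of (T, L, U, Lc) \<Rightarrow>
        let L' = {i\<in>I. i \<notin> Lc \<and> lab_objs R Os p i T U \<noteq> {}};
            T' = (\<Union>i\<in>L'. lab_objs R Os p i T U)
        in (T', L', U \<union> T', Lc \<union> L'))"

definition labT where "labT I Os R p Od k = fst (lab I Os R p Od k)"
definition labL where "labL I Os R p Od k = fst (snd (lab I Os R p Od k))"
definition labU where "labU I Os R p Od k = fst (snd (snd (lab I Os R p Od k)))"

definition Lset where "Lset I Os R p Od = (\<Union>k. labL I Os R p Od (Suc k))"
definition Otil where "Otil I Os R p Od = (\<Union>k. labT I Os R p Od (Suc k))"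
definition Otil_i where
  "Otil_i I Os R p Od i = (\<Union>k. if i \<in> labL I Os R p Od (Suc k)
        then lab_objs R Os p i (labT I Os R p Od k) (labU I Os R p Od k) else {})"
definition Obar where "Obar I Os R p Od = Od \<union> Otil I Os R p Od"

definition active where
  "active I Os R \<omega> p Od = Lset I Os R p Od \<union> {i\<in>I. (\<Sum>ob\<in>Os. \<omega> i ob) > 0}"

definition Bset where
  "Bset I Os R p Od i = {ob\<in>Obar I Os R p Od. \<forall>ob'\<in>Obar I Os R p Od. R i ob ob'}"
definition Aset where
  "Aset I Os R p Od i =
     Bset I Os R p Od i \<inter> labT I Os R p Od (LEAST k. Bset I Os R p Od i \<inter> labT I Os R p Od k \<noteq> {})"

definition trade_feasible where
  "trade_feasible I Os R \<omega> p Od lam \<beta> \<gamma> xi xo \<longleftrightarrow>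
     (let Ia = active I Os R \<omega> p Od; Ob = Obar I Os R p Od; Ot = Otil I Os R p Od in
       (\<forall>i\<in>Ia. xi i \<ge> 0) \<and> (\<forall>ob\<in>Ob. xo ob \<ge> 0) \<and>
       (\<forall>ob\<in>Ob. xo ob = (\<Sum>i\<in>Ia. \<gamma> i ob * xi i)) \<and>
       (\<forall>i\<in>Ia. xi i = (\<Sum>ob\<in>Ob. lam i ob * xo ob)) \<and>
       (\<forall>i\<in>Ia. \<forall>ob\<in>Od. lam i ob * xo ob \<le> \<beta> i ob) \<and>
       (\<forall>i\<in>Ia. \<forall>ob\<in>Ot. lam i ob * xo ob \<le> p i ob))"

(* one step d of FTTC: from (\<omega>(d-1), p(d-1), Os(d-1)) to (\<omega>(d), p(d), Os(d)), for some
   admissible choice of ratio matrix \<lambda>, quota matrix \<beta> and division matrix \<gamma> *)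
definition fttc_step ::
  "'i set \<Rightarrow> 'o set \<Rightarrow> ('i \<Rightarrow> 'o \<Rightarrow> 'o \<Rightarrow> bool)
   \<Rightarrow> ('i \<Rightarrow> 'o \<Rightarrow> real) \<times> ('i \<Rightarrow> 'o \<Rightarrow> real) \<times> 'o set
   \<Rightarrow> ('i \<Rightarrow> 'o \<Rightarrow> real) \<times> ('i \<Rightarrow> 'o \<Rightarrow> real) \<times> 'o set \<Rightarrow> bool" where
  "fttc_step I Os R s s' \<longleftrightarrow>
     (case s of (\<omega>, p, Od) \<Rightarrow> case s' of (\<omega>', p', Od') \<Rightarrow>
      Od \<noteq> {} \<and>
      (let Ia = active I Os R \<omega> p Od; Ob = Obar I Os R p Od; Ot = Otil I Os R p Od in
       \<exists>lam \<beta> \<gamma> xi xo.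
         \<comment> \<open>ratio matrix\<close>
         (\<forall>i\<in>Ia. \<forall>ob\<in>Ob. lam i ob \<ge> 0) \<and>
         (\<forall>ob\<in>Ob. (\<Sum>i\<in>Ia. lam i ob) = 1) \<and>
         (\<forall>i\<in>Ia. \<forall>ob\<in>Od. lam i ob > 0 \<longrightarrow> \<omega> i ob > 0) \<and>
         (\<forall>i\<in>Ia. \<forall>ob\<in>Ot. lam i ob > 0 \<longrightarrow> ob \<in> Otil_i I Os R p Od i) \<and>
         \<comment> \<open>quota matrix\<close>
         (\<forall>i\<in>Ia. \<forall>ob\<in>Od. 0 \<le> \<beta> i ob \<and> \<beta> i ob \<le> \<omega> i ob) \<and>
         \<comment> \<open>division matrix\<close>
         (\<forall>i\<in>Ia. \<forall>ob\<in>Ob. \<gamma> i ob \<ge> 0) \<and>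
         (\<forall>i\<in>Ia. (\<Sum>ob\<in>Ob. \<gamma> i ob) = 1) \<and>
         (\<forall>i\<in>Ia. \<forall>ob\<in>Ob. \<gamma> i ob > 0 \<longrightarrow> ob \<in> Aset I Os R p Od i) \<and>
         \<comment> \<open>x* is the maximum nonnegative solution\<close>
         trade_feasible I Os R \<omega> p Od lam \<beta> \<gamma> xi xo \<and>
         (\<forall>yi yo. trade_feasible I Os R \<omega> p Od lam \<beta> \<gamma> yi yo \<longrightarrow>
              (\<forall>i\<in>Ia. yi i \<le> xi i) \<and> (\<forall>ob\<in>Ob. yo ob \<le> xo ob)) \<and>
         \<comment> \<open>updates\<close>
         (\<forall>i ob. \<omega>' i ob = (if i \<in> Ia then (if ob \<in> Od then \<omega> i ob - lam i ob * xo ob else 0)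
                          else \<omega> i ob)) \<and>
         (\<forall>i ob. p' i ob = (if i \<in> Ia then
                           p i ob - (if ob \<in> Otil_i I Os R p Od i then lam i ob * xo ob else 0)
                                 + (if ob \<in> Ob then \<gamma> i ob * xi i else 0)
                          else p i ob)) \<and>
         Od' = {ob\<in>Od. (\<Sum>i\<in>I. \<omega>' i ob) > 0}))"

definition fttc_output ::
  "'i set \<Rightarrow> 'o set \<Rightarrow> ('i \<Rightarrow> 'o \<Rightarrow> 'o \<Rightarrow> bool) \<Rightarrow> ('i \<Rightarrow> 'o \<Rightarrow> real)
   \<Rightarrow> ('i \<Rightarrow> 'o \<Rightarrow> real) \<Rightarrow> bool" where
  "fttc_output I Os R \<omega> p \<longleftrightarrow>
     (\<exists>(n::nat) s. s 0 = (\<omega>, (\<lambda>_ _. 0), Os) \<and>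
        (\<forall>d<n. fttc_step I Os R (s d) (s (Suc d))) \<and>
        snd (snd (s n)) = {} \<and> p = fst (snd (s n)))"

end

theory Submission
  imports Defs
begin


definition labLc where "labLc I Os R p Od k = snd (snd (snd (lab I Os R p Od k)))"

lemma lab_Suc_eq:
  "lab I Os R p Od (Suc k) =
    ((\<Union>i\<in>{i\<in>I. i \<notin> labLc I Os R p Od k \<and> lab_objs R Os p i (labT I Os R p Od k) (labU I Os R p Od k) \<noteq> {}}.
        lab_objs R Os p i (labT I Os R p Od k) (labU I Os R p Od k)),
     {i\<in>I. i \<notin> labLc I Os R p Od k \<and> lab_objs R Os p i (labT I Os R p Od k) (labU I Os R p Od k) \<noteq> {}},
     labU I Os R p Od k \<union> (\<Union>i\<in>{i\<in>I. i \<notin> labLc I Os R p Od k \<and> lab_objs R Os p i (labT I Os R p Od k) (labU I Os R p Od k) \<noteq> {}}.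
        lab_objs R Os p i (labT I Os R p Od k) (labU I Os R p Od k)),
     labLc I Os R p Od k \<union> {i\<in>I. i \<notin> labLc I Os R p Od k \<and> lab_objs R Os p i (labT I Os R p Od k) (labU I Os R p Od k) \<noteq> {}})"
  by (simp add: labT_def labU_def labLc_def Let_def split: prod.splits)

lemma labL_Suc: "labL I Os R p Od (Suc k) = {i\<in>I. i \<notin> labLc I Os R p Od k \<and> lab_objs R Os p i (labT I Os R p Od k) (labU I Os R p Od k) \<noteq> {}}"
  by (simp add: labL_def lab_Suc_eq del: lab.simps)
lemma labT_Suc: "labT I Os R p Od (Suc k) = (\<Union>i\<in>labL I Os R p Od (Suc k). lab_objs R Os p i (labT I Os R p Od k) (labU I Os R p Od k))"
  by (simp add: labL_Suc) (simp add: labT_def lab_Suc_eq del: lab.simps)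
lemma labU_Suc: "labU I Os R p Od (Suc k) = labU I Os R p Od k \<union> labT I Os R p Od (Suc k)"
  by (simp add: labT_Suc labL_Suc) (simp add: labU_def lab_Suc_eq del: lab.simps)
lemma labLc_Suc: "labLc I Os R p Od (Suc k) = labLc I Os R p Od k \<union> labL I Os R p Od (Suc k)"
  by (simp add: labL_Suc) (simp add: labLc_def lab_Suc_eq del: lab.simps)
lemma labT_0: "labT I Os R p Od 0 = Od" by (simp add: labT_def)
lemma labU_0: "labU I Os R p Od 0 = Od" by (simp add: labU_def)
lemma labLc_0: "labLc I Os R p Od 0 = {}" by (simp add: labLc_def)

context fixes I :: "'i set" and Os :: "'o set" and R :: "'i \<Rightarrow> 'o \<Rightarrow> 'o \<Rightarrow> bool"
  and p :: "'i \<Rightarrow> 'o \<Rightarrow> real" and Od :: "'o set"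
begin

lemma labT_sub_U: "labT I Os R p Od k \<subseteq> labU I Os R p Od k"
  by (cases k) (auto simp: labT_0 labU_0 labU_Suc)

lemma labU_mono: "k \<le> k' \<Longrightarrow> labU I Os R p Od k \<subseteq> labU I Os R p Od k'"
proof (induction k' rule: dec_induct)
  case (step n) then show ?case by (auto simp: labU_Suc)
qed simp

lemma Od_sub_U: "Od \<subseteq> labU I Os R p Od k"
  using labU_mono[of 0 k] by (simp add: labU_0)

lemma lab_objs_sub: "lab_objs R Os p i T U \<subseteq> Os - U"
  by (auto simp: lab_objs_def)

lemma labT_Suc_sub: "labT I Os R p Od (Suc k) \<subseteq> Os - labU I Os R p Od k"
  using lab_objs_sub by (auto simp: labT_Suc)

lemma labL_sub: "labL I Os R p Od (Suc k) \<subseteq> I"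
  by (auto simp: labL_Suc)

lemma labU_sub_Obar: "labU I Os R p Od k \<subseteq> Obar I Os R p Od"
  by (induction k) (auto simp: labU_0 labU_Suc Obar_def Otil_def)

lemma Obar_ex_T: "a \<in> Obar I Os R p Od \<Longrightarrow> \<exists>k. a \<in> labT I Os R p Od k"
  by (auto simp: Obar_def Otil_def labT_0 intro: exI[of _ 0])

lemma labT_sub_Obar: "labT I Os R p Od k \<subseteq> Obar I Os R p Od"
  using labT_sub_U labU_sub_Obar by blast

lemma Otil_disj: "Otil I Os R p Od \<inter> Od = {}"
  using labT_Suc_sub Od_sub_U by (fastforce simp: Otil_def)

lemma Otil_sub: "Otil I Os R p Od \<subseteq> Os"
  using labT_Suc_sub by (fastforce simp: Otil_def)

lemma Obar_sub: "Od \<subseteq> Os \<Longrightarrow> Obar I Os R p Od \<subseteq> Os"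
  using Otil_sub by (auto simp: Obar_def)

lemma Otil_i_sub: "Otil_i I Os R p Od i \<subseteq> Otil I Os R p Od"
  by (auto simp: Otil_i_def Otil_def labT_Suc split: if_splits)

lemma labLc_ex: "i \<in> labLc I Os R p Od k \<Longrightarrow> \<exists>j<k. i \<in> labL I Os R p Od (Suc j)"
  by (induction k) (auto simp: labLc_0 labLc_Suc less_Suc_eq)

lemma Lset_sub: "Lset I Os R p Od \<subseteq> I"
  using labL_sub by (auto simp: Lset_def)

lemma active_sub: "active I Os R \<omega> p Od \<subseteq> I"
  using Lset_sub by (auto simp: active_def)

lemma closure:
  assumes Od: "Od \<subseteq> Os" and i: "i \<in> I"
    and trans: "\<forall>a\<in>Os. \<forall>b\<in>Os. \<forall>c\<in>Os. R i a b \<longrightarrow> R i b c \<longrightarrow> R i a c"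
    and a: "a \<in> Obar I Os R p Od" and s: "s \<in> Os" "p i s > 0" "indiff R i a s"
    and H: "\<forall>x\<in>Os. p i x > 0 \<longrightarrow> (\<forall>b\<in>Obar I Os R p Od. R i x b)"
  shows "s \<in> Obar I Os R p Od"
proof -
  obtain k where k: "a \<in> labT I Os R p Od k" using Obar_ex_T[OF a] by blast
  show ?thesis
  proof (cases "s \<in> labU I Os R p Od k")
    case True then show ?thesis using labU_sub_Obar by blast
  next
    case notU: False
    show ?thesis
    proof (cases "i \<in> labLc I Os R p Od k")
      case False
      have "s \<in> lab_objs R Os p i (labT I Os R p Od k) (labU I Os R p Od k)"
        using notU s k by (auto simp: lab_objs_def)
      then have "s \<in> labT I Os R p Od (Suc k)"
        using False i by (auto simp: labT_Suc labL_Suc)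
      then show ?thesis using labT_sub_Obar by blast
    next
      case True
      then obtain j where j: "j < k" "i \<in> labL I Os R p Od (Suc j)" using labLc_ex by blast
      then obtain w where w: "w \<in> lab_objs R Os p i (labT I Os R p Od j) (labU I Os R p Od j)"
        by (auto simp: labL_Suc)
      then obtain z where z: "z \<in> labT I Os R p Od j" "indiff R i z w" "w \<in> Os" "p i w > 0"
        by (auto simp: lab_objs_def)
      have zO: "z \<in> Obar I Os R p Od" using z labT_sub_Obar by blast
      have aOs: "a \<in> Os" "z \<in> Os" using a zO Obar_sub[OF Od] by auto
      have "R i s z" using H s zO by blast
      moreover have "R i w a" using H z a by blast
      ultimately have "indiff R i z s"
      proof -
        have "R i z w" "R i a s" using z s by (auto simp: indiff_def)
        then have "R i z a" using trans \<open>R i w a\<close> z aOs by blast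
        then have "R i z s" using trans \<open>R i a s\<close> z aOs s by blast
        then show ?thesis using \<open>R i s z\<close> by (simp add: indiff_def)
      qed
      show ?thesis
      proof (cases "s \<in> labU I Os R p Od j")
        case True then show ?thesis using labU_sub_Obar by blast
      next
        case False
        then have "s \<in> lab_objs R Os p i (labT I Os R p Od j) (labU I Os R p Od j)"
          using s z \<open>indiff R i z s\<close> by (auto simp: lab_objs_def)
        then have "s \<in> labT I Os R p Od (Suc j)" using j by (auto simp: labT_Suc)
        then show ?thesis using labT_sub_Obar by blast
      qed
    qed
  qed
qed

end



locale fstep =
  fixes I :: "'i set" and Os :: "'o set" and R :: "'i \<Rightarrow> 'o \<Rightarrow> 'o \<Rightarrow> bool"
    and \<omega> p \<omega>' p' :: "'i \<Rightarrow> 'o \<Rightarrow> real" and Od Od' :: "'o set"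
    and lam \<beta> \<gamma> :: "'i \<Rightarrow> 'o \<Rightarrow> real" and xi :: "'i \<Rightarrow> real" and xo :: "'o \<Rightarrow> real"
    and Ia :: "'i set" and Ob Ot :: "'o set"
  assumes finI: "finite I" and finOs: "finite Os"
    and tot: "\<forall>i\<in>I. \<forall>a\<in>Os. \<forall>b\<in>Os. R i a b \<or> R i b a"
    and trans: "\<forall>i\<in>I. \<forall>a\<in>Os. \<forall>b\<in>Os. \<forall>c\<in>Os. R i a b \<longrightarrow> R i b c \<longrightarrow> R i a c"
    and OdOs: "Od \<subseteq> Os"
    and om_nn: "\<forall>i\<in>I. \<forall>ob\<in>Os. 0 \<le> \<omega> i ob"
    and p_nn: "\<forall>i\<in>I. \<forall>ob\<in>Os. 0 \<le> p i ob"
    and om_zero: "\<forall>i\<in>I. \<forall>ob\<in>Os - Od. \<omega> i ob = 0"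
    and H: "\<forall>i\<in>I. \<forall>x\<in>Os. p i x > 0 \<longrightarrow> (\<forall>b\<in>Obar I Os R p Od. R i x b)"
    and Ia_def: "Ia = active I Os R \<omega> p Od"
    and Ob_def: "Ob = Obar I Os R p Od"
    and Ot_def: "Ot = Otil I Os R p Od"
    and lam_nn: "\<forall>i\<in>Ia. \<forall>ob\<in>Ob. lam i ob \<ge> 0"
    and lam_sum: "\<forall>ob\<in>Ob. (\<Sum>i\<in>Ia. lam i ob) = 1"
    and lam_Ot: "\<forall>i\<in>Ia. \<forall>ob\<in>Ot. lam i ob > 0 \<longrightarrow> ob \<in> Otil_i I Os R p Od i"
    and beta: "\<forall>i\<in>Ia. \<forall>ob\<in>Od. 0 \<le> \<beta> i ob \<and> \<beta> i ob \<le> \<omega> i ob"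
    and gam_nn: "\<forall>i\<in>Ia. \<forall>ob\<in>Ob. \<gamma> i ob \<ge> 0"
    and gam_sum: "\<forall>i\<in>Ia. (\<Sum>ob\<in>Ob. \<gamma> i ob) = 1"
    and gam_A: "\<forall>i\<in>Ia. \<forall>ob\<in>Ob. \<gamma> i ob > 0 \<longrightarrow> ob \<in> Aset I Os R p Od i"
    and xi_nn: "\<forall>i\<in>Ia. xi i \<ge> 0" and xo_nn: "\<forall>ob\<in>Ob. xo ob \<ge> 0"
    and xo_eq: "\<forall>ob\<in>Ob. xo ob = (\<Sum>i\<in>Ia. \<gamma> i ob * xi i)"
    and xi_eq: "\<forall>i\<in>Ia. xi i = (\<Sum>ob\<in>Ob. lam i ob * xo ob)"
    and capOd: "\<forall>i\<in>Ia. \<forall>ob\<in>Od. lam i ob * xo ob \<le> \<beta> i ob"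
    and capOt: "\<forall>i\<in>Ia. \<forall>ob\<in>Ot. lam i ob * xo ob \<le> p i ob"
    and om'_def: "\<forall>i ob. \<omega>' i ob = (if i \<in> Ia then (if ob \<in> Od then \<omega> i ob - lam i ob * xo ob else 0)
                          else \<omega> i ob)"
    and p'_def: "\<forall>i ob. p' i ob = (if i \<in> Ia then
                           p i ob - (if ob \<in> Otil_i I Os R p Od i then lam i ob * xo ob else 0)
                                 + (if ob \<in> Ob then \<gamma> i ob * xi i else 0)
                          else p i ob)"
    and Od'_def: "Od' = {ob\<in>Od. (\<Sum>i\<in>I. \<omega>' i ob) > 0}"
begin

lemma Ia_sub: "Ia \<subseteq> I" unfolding Ia_def by (rule active_sub)
lemma Ob_sub: "Ob \<subseteq> Os" unfolding Ob_def by (rule Obar_sub[OF OdOs])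
lemma Od_sub_Ob: "Od \<subseteq> Ob" using Ob_def by (auto simp: Obar_def)
lemma Ot_sub_Ob: "Ot \<subseteq> Ob" using Ob_def Ot_def by (auto simp: Obar_def)
lemma Ob_eq: "Ob = Od \<union> Ot" using Ob_def Ot_def by (auto simp: Obar_def)
lemma Ot_disj: "Ot \<inter> Od = {}" unfolding Ot_def by (rule Otil_disj)
lemma Oti_sub: "Otil_i I Os R p Od i \<subseteq> Ot" unfolding Ot_def by (rule Otil_i_sub)
lemma finOb: "finite Ob" by (rule finite_subset[OF Ob_sub finOs])
lemma finIa: "finite Ia" by (rule finite_subset[OF Ia_sub finI])

lemma lam_zero: "i \<in> Ia \<Longrightarrow> ob \<in> Ot \<Longrightarrow> ob \<notin> Otil_i I Os R p Od i \<Longrightarrow> lam i ob = 0"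
  using lam_Ot lam_nn Ot_sub_Ob by force

lemma p'_out: "ob \<notin> Ob \<Longrightarrow> p' i ob = p i ob"
proof -
  assume "ob \<notin> Ob"
  then have "ob \<notin> Otil_i I Os R p Od i" using Oti_sub Ot_sub_Ob by blast
  then show ?thesis using p'_def \<open>ob \<notin> Ob\<close> by simp
qed

lemma om'_eq: "\<omega>' i ob = (if i \<in> Ia then (if ob \<in> Od then \<omega> i ob - lam i ob * xo ob else 0)
                          else \<omega> i ob)" by (rule om'_def[rule_format])
lemma p'_eq: "p' i ob = (if i \<in> Ia then
                           p i ob - (if ob \<in> Otil_i I Os R p Od i then lam i ob * xo ob else 0)
                                 + (if ob \<in> Ob then \<gamma> i ob * xi i else 0)
                          else p i ob)" by (rule p'_def[rule_format])

lemma om'_nn: "\<forall>i\<in>I. \<forall>ob\<in>Os. 0 \<le> \<omega>' i ob"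
proof (intro ballI)
  fix i ob assume i: "i \<in> I" and ob: "ob \<in> Os"
  show "0 \<le> \<omega>' i ob"
  proof (cases "i \<in> Ia \<and> ob \<in> Od")
    case True
    then have "lam i ob * xo ob \<le> \<omega> i ob" using capOd beta by force
    then show ?thesis unfolding om'_eq using True by simp
  next
    case False then show ?thesis unfolding om'_eq using om_nn i ob by auto
  qed
qed

lemma p'_nn: "\<forall>i\<in>I. \<forall>ob\<in>Os. 0 \<le> p' i ob"
proof (intro ballI)
  fix i ob assume i: "i \<in> I" and ob: "ob \<in> Os"
  show "0 \<le> p' i ob"
  proof (cases "i \<in> Ia")
    case True
    have a: "(if ob \<in> Otil_i I Os R p Od i then lam i ob * xo ob else 0) \<le> p i ob"
      using capOt True Oti_sub p_nn i ob by auto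
    have b: "(if ob \<in> Ob then \<gamma> i ob * xi i else 0) \<ge> 0"
      using gam_nn xi_nn True by auto
    show ?thesis using a b True unfolding p'_eq by simp
  next
    case False then show ?thesis using p_nn i ob unfolding p'_eq by simp
  qed
qed

lemma Od'_sub: "Od' \<subseteq> Od" using Od'_def by auto

lemma om'_zero: "\<forall>i\<in>I. \<forall>ob\<in>Os - Od'. \<omega>' i ob = 0"
proof (intro ballI)
  fix i ob assume i: "i \<in> I" and ob: "ob \<in> Os - Od'"
  show "\<omega>' i ob = 0"
  proof (cases "ob \<in> Od")
    case True
    then have "(\<Sum>i\<in>I. \<omega>' i ob) \<le> 0" using ob Od'_def by auto
    moreover have "\<forall>j\<in>I. 0 \<le> \<omega>' j ob" using om'_nn ob by auto
    ultimately have "\<forall>j\<in>I. \<omega>' j ob = 0"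
      using sum_nonneg_eq_0_iff[OF finI, of "\<lambda>j. \<omega>' j ob"] by (simp add: order_antisym sum_nonneg)
    then show ?thesis using i by blast
  next
    case False then show ?thesis unfolding om'_eq using om_zero i ob by auto
  qed
qed

lemma change:
  assumes i: "i \<in> I" and ob: "ob \<in> Os"
  shows "p' i ob + \<omega>' i ob = p i ob + \<omega> i ob
     - (if i \<in> Ia then ((if ob \<in> Od then lam i ob * xo ob else 0)
           + (if ob \<in> Otil_i I Os R p Od i then lam i ob * xo ob else 0)
           - (if ob \<in> Ob then \<gamma> i ob * xi i else 0)) else 0)"
proof -
  have P: "p' i ob = (if i \<in> Ia then
                           p i ob - (if ob \<in> Otil_i I Os R p Od i then lam i ob * xo ob else 0)
                                 + (if ob \<in> Ob then \<gamma> i ob * xi i else 0)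
                          else p i ob)" by (rule p'_def[rule_format])
  have W: "\<omega>' i ob = (if i \<in> Ia then (if ob \<in> Od then \<omega> i ob - lam i ob * xo ob else 0)
                          else \<omega> i ob)" by (rule om'_def[rule_format])
  have Z: "ob \<notin> Od \<Longrightarrow> \<omega> i ob = 0" using om_zero i ob by blast
  show ?thesis
  proof (cases "i \<in> Ia")
    case True
    show ?thesis
    proof (cases "ob \<in> Od")
      case True2: True
      show ?thesis unfolding P W using True True2 by simp
    next
      case False
      show ?thesis unfolding P W using True False Z by simp
    qed
  next
    case False
    show ?thesis unfolding P W using False by simp
  qed
qed

end



context fstep begin
lemma finOt: "finite Ot" using finite_subset[OF Ot_sub_Ob finOb] .
lemma finOd: "finite Od" using finite_subset[OF OdOs finOs] .
lemma finOti: "finite (Otil_i I Os R p Od i)" using finite_subset[OF Oti_sub finOt] .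

lemma sumD_Ia:
  assumes ob: "ob \<in> Os"
  shows "(\<Sum>i\<in>Ia. (if ob \<in> Od then lam i ob * xo ob else 0)
           + (if ob \<in> Otil_i I Os R p Od i then lam i ob * xo ob else 0)
           - (if ob \<in> Ob then \<gamma> i ob * xi i else 0)) = 0"
proof -
  have S: "(\<Sum>i\<in>Ia. (if ob \<in> Od then lam i ob * xo ob else 0)
           + (if ob \<in> Otil_i I Os R p Od i then lam i ob * xo ob else 0)
           - (if ob \<in> Ob then \<gamma> i ob * xi i else 0))
      = (\<Sum>i\<in>Ia. (if ob \<in> Od then lam i ob * xo ob else 0))
        + (\<Sum>i\<in>Ia. (if ob \<in> Otil_i I Os R p Od i then lam i ob * xo ob else 0))
        - (\<Sum>i\<in>Ia. (if ob \<in> Ob then \<gamma> i ob * xi i else 0))"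
    by (simp add: sum.distrib sum_subtractf)
  show ?thesis
  proof (cases "ob \<in> Ob")
    case False
    then have "ob \<notin> Od" "\<And>i. ob \<notin> Otil_i I Os R p Od i" using Od_sub_Ob Oti_sub Ot_sub_Ob by blast+
    then show ?thesis using False by simp
  next
    case True
    have G: "(\<Sum>i\<in>Ia. (if ob \<in> Ob then \<gamma> i ob * xi i else 0)) = xo ob"
      using True xo_eq by simp
    show ?thesis
    proof (cases "ob \<in> Od")
      case True2: True
      then have "\<And>i. ob \<notin> Otil_i I Os R p Od i" using Oti_sub Ot_disj by blast
      moreover have "(\<Sum>i\<in>Ia. lam i ob * xo ob) = xo ob"
        using lam_sum True by (simp add: sum_distrib_right[symmetric])
      ultimately show ?thesis using S G True2 by simp
    next
      case False
      then have Ot: "ob \<in> Ot" using True Ob_eq by blast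
      have "(\<Sum>i\<in>Ia. (if ob \<in> Otil_i I Os R p Od i then lam i ob * xo ob else 0))
           = (\<Sum>i\<in>Ia. lam i ob * xo ob)"
        by (rule sum.cong) (use lam_zero Ot in auto)
      also have "\<dots> = xo ob"
        using lam_sum True by (simp add: sum_distrib_right[symmetric])
      finally show ?thesis using S G False by simp
    qed
  qed
qed

lemma col:
  assumes ob: "ob \<in> Os"
  shows "(\<Sum>i\<in>I. p' i ob + \<omega>' i ob) = (\<Sum>i\<in>I. p i ob + \<omega> i ob)"
proof -
  define D where "D i = (if ob \<in> Od then lam i ob * xo ob else 0)
           + (if ob \<in> Otil_i I Os R p Od i then lam i ob * xo ob else 0)
           - (if ob \<in> Ob then \<gamma> i ob * xi i else 0)" for i
  have "(\<Sum>i\<in>I. p' i ob + \<omega>' i ob) = (\<Sum>i\<in>I. (p i ob + \<omega> i ob) - (if i \<in> Ia then D i else 0))"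
    by (rule sum.cong) (use change ob in \<open>auto simp: D_def\<close>)
  also have "\<dots> = (\<Sum>i\<in>I. p i ob + \<omega> i ob) - (\<Sum>i\<in>I. if i \<in> Ia then D i else 0)"
    by (simp add: sum_subtractf)
  also have "(\<Sum>i\<in>I. if i \<in> Ia then D i else 0) = (\<Sum>i\<in>Ia. D i)"
    using sum.inter_restrict[OF finI, of D Ia] Ia_sub by (simp add: Int_absorb1)
  also have "(\<Sum>i\<in>Ia. D i) = 0" unfolding D_def by (rule sumD_Ia[OF ob])
  finally show ?thesis by simp
qed

lemma xi_split:
  assumes i: "i \<in> Ia"
  shows "xi i = (\<Sum>ob\<in>Od. lam i ob * xo ob) + (\<Sum>ob\<in>Otil_i I Os R p Od i. lam i ob * xo ob)"
proof -
  have "xi i = (\<Sum>ob\<in>Od \<union> Ot. lam i ob * xo ob)" using xi_eq i Ob_eq by simp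
  also have "\<dots> = (\<Sum>ob\<in>Od. lam i ob * xo ob) + (\<Sum>ob\<in>Ot. lam i ob * xo ob)"
    by (rule sum.union_disjoint) (use finOd finOt Ot_disj in auto)
  also have "(\<Sum>ob\<in>Ot. lam i ob * xo ob) = (\<Sum>ob\<in>Otil_i I Os R p Od i. lam i ob * xo ob)"
    by (rule sum.mono_neutral_right[OF finOt Oti_sub]) (use lam_zero i in auto)
  finally show ?thesis .
qed

lemma row:
  assumes i: "i \<in> I"
  shows "(\<Sum>ob\<in>Os. p' i ob + \<omega>' i ob) = (\<Sum>ob\<in>Os. p i ob + \<omega> i ob)"
proof (cases "i \<in> Ia")
  case False
  then show ?thesis by (intro sum.cong) (use change i in auto)
next
  case True
  define f where "f ob = lam i ob * xo ob" for ob
  have "(\<Sum>ob\<in>Os. p' i ob + \<omega>' i ob) = (\<Sum>ob\<in>Os. (p i ob + \<omega> i ob)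
      - ((if ob \<in> Od then f ob else 0) + (if ob \<in> Otil_i I Os R p Od i then f ob else 0)
           - (if ob \<in> Ob then \<gamma> i ob * xi i else 0)))"
    by (rule sum.cong) (use change i True in \<open>auto simp: f_def\<close>)
  also have "\<dots> = (\<Sum>ob\<in>Os. p i ob + \<omega> i ob) - ((\<Sum>ob\<in>Os. if ob \<in> Od then f ob else 0)
      + (\<Sum>ob\<in>Os. if ob \<in> Otil_i I Os R p Od i then f ob else 0)
      - (\<Sum>ob\<in>Os. if ob \<in> Ob then \<gamma> i ob * xi i else 0))"
    by (simp add: sum_subtractf sum.distrib)
  also have "(\<Sum>ob\<in>Os. if ob \<in> Od then f ob else 0) = sum f Od"
    using sum.inter_restrict[OF finOs, of f Od] OdOs by (simp add: Int_absorb1)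
  also have "(\<Sum>ob\<in>Os. if ob \<in> Otil_i I Os R p Od i then f ob else 0) = sum f (Otil_i I Os R p Od i)"
  proof -
    have "Otil_i I Os R p Od i \<subseteq> Os" using Oti_sub Ot_sub_Ob Ob_sub by blast
    then show ?thesis using sum.inter_restrict[OF finOs, of f "Otil_i I Os R p Od i"]
      by (simp add: Int_absorb1)
  qed
  also have "(\<Sum>ob\<in>Os. if ob \<in> Ob then \<gamma> i ob * xi i else 0) = (\<Sum>ob\<in>Ob. \<gamma> i ob * xi i)"
    using sum.inter_restrict[OF finOs, of "\<lambda>ob. \<gamma> i ob * xi i" Ob] Ob_sub by (simp add: Int_absorb1)
  also have "\<dots> = xi i" using gam_sum True by (simp add: sum_distrib_right[symmetric])
  also have "xi i = sum f Od + sum f (Otil_i I Os R p Od i)" using xi_split[OF True] by (simp add: f_def)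
  finally show ?thesis by simp
qed

end


context fstep begin
lemma Aset_best: "x \<in> Aset I Os R p Od i \<Longrightarrow> x \<in> Ob \<and> (\<forall>b\<in>Ob. R i x b)"
  unfolding Aset_def Bset_def Ob_def by (simp add: Int_def)

lemma acq:
  assumes "p' i x > 0" "p i x \<le> 0"
  shows "x \<in> Ob \<and> (\<forall>b\<in>Ob. R i x b)"
proof -
  have iIa: "i \<in> Ia" using assms p'_eq by (cases "i \<in> Ia") auto
  have xOb: "x \<in> Ob" using assms p'_out by force
  have "(if x \<in> Otil_i I Os R p Od i then lam i x * xo x else 0) \<ge> 0"
    using lam_nn xo_nn iIa xOb by auto
  then have "\<gamma> i x * xi i > 0" using assms iIa xOb unfolding p'_eq by auto
  then have "\<gamma> i x > 0" using xi_nn iIa by (auto simp: zero_less_mult_iff)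
  then show ?thesis using gam_A iIa xOb Aset_best by blast
qed

lemma trans_i: "i \<in> I \<Longrightarrow> \<forall>a\<in>Os. \<forall>b\<in>Os. \<forall>c\<in>Os. R i a b \<longrightarrow> R i b c \<longrightarrow> R i a c"
  using trans by (rule bspec)
lemma transR: "i \<in> I \<Longrightarrow> a \<in> Os \<Longrightarrow> b \<in> Os \<Longrightarrow> c \<in> Os \<Longrightarrow> R i a b \<Longrightarrow> R i b c \<Longrightarrow> R i a c"
  using trans_i by blast

lemma labU'_sub: "labU I Os R p' Od' k \<subseteq> Ob"
proof (induction k)
  case 0 then show ?case using Od'_sub Od_sub_Ob by (simp add: labU_0)
next
  case (Suc k)
  have "labT I Os R p' Od' (Suc k) \<subseteq> Ob"
  proof
    fix s assume "s \<in> labT I Os R p' Od' (Suc k)"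
    then obtain i where i: "i \<in> labL I Os R p' Od' (Suc k)"
      and s: "s \<in> lab_objs R Os p' i (labT I Os R p' Od' k) (labU I Os R p' Od' k)"
      by (auto simp: labT_Suc)
    have iI: "i \<in> I" by (rule subsetD[OF labL_sub i])
    obtain a where a: "a \<in> labT I Os R p' Od' k" "indiff R i a s" and sOs: "s \<in> Os" and ps: "p' i s > 0"
      using s by (auto simp: lab_objs_def)
    have aOb: "a \<in> Obar I Os R p Od" using subsetD[OF Suc.IH subsetD[OF labT_sub_U a(1)]] Ob_def by simp
    show "s \<in> Ob"
    proof (rule ccontr)
      assume "s \<notin> Ob"
      then have "p i s > 0" using ps p'_out by simp
      then have "s \<in> Obar I Os R p Od"
        by (rule closure[OF OdOs iI trans_i[OF iI] aOb sOs _ a(2) bspec[OF H iI]])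
      then show False using \<open>s \<notin> Ob\<close> Ob_def by simp
    qed
  qed
  then show ?case using Suc.IH by (simp add: labU_Suc)
qed

lemma Obar_mono: "Obar I Os R p' Od' \<subseteq> Ob"
proof
  fix x assume "x \<in> Obar I Os R p' Od'"
  then obtain k where "x \<in> labT I Os R p' Od' k" by (auto dest: Obar_ex_T)
  then show "x \<in> Ob" using labT_sub_U[of I Os R p' Od' k] labU'_sub[of k] by blast
qed

lemma H': "\<forall>i\<in>I. \<forall>x\<in>Os. p' i x > 0 \<longrightarrow> (\<forall>b\<in>Obar I Os R p' Od'. R i x b)"
proof (intro ballI impI)
  fix i x b assume i: "i \<in> I" and x: "x \<in> Os" and px: "p' i x > 0" and b: "b \<in> Obar I Os R p' Od'"
  have bOb: "b \<in> Ob" using b Obar_mono by blast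
  show "R i x b"
  proof (cases "p i x > 0")
    case True
    have "\<forall>b\<in>Obar I Os R p Od. R i x b" using bspec[OF bspec[OF H i] x] True by blast
    then show ?thesis using bOb unfolding Ob_def by blast
  next
    case False then show ?thesis using acq[OF px] bOb by simp
  qed
qed

end


context fstep begin
lemma sd_step:
  assumes i: "i \<in> I"
  shows "sd_geq Os R i (\<lambda>ob. p' i ob + \<omega>' i ob) (\<lambda>ob. p i ob + \<omega> i ob)"
  unfolding sd_geq_def
proof (intro ballI)
  fix o0 assume o0: "o0 \<in> Os"
  define up where "up = {ob'\<in>Os. R i ob' o0}"
  have finup: "finite up" using finOs by (simp add: up_def)
  have upOs: "up \<subseteq> Os" by (auto simp: up_def)
  show "(\<Sum>ob'\<in>{ob'\<in>Os. R i ob' o0}. p' i ob' + \<omega>' i ob') \<ge> (\<Sum>ob'\<in>{ob'\<in>Os. R i ob' o0}. p i ob' + \<omega> i ob')"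
    unfolding up_def[symmetric]
  proof (cases "i \<in> Ia")
    case False
    then show "(\<Sum>ob'\<in>up. p' i ob' + \<omega>' i ob') \<ge> (\<Sum>ob'\<in>up. p i ob' + \<omega> i ob')"
      using change i upOs by (intro sum_mono) auto
  next
    case True
    define f where "f ob = lam i ob * xo ob" for ob
    have fnn: "\<And>ob. ob \<in> Ob \<Longrightarrow> f ob \<ge> 0" using lam_nn xo_nn True by (simp add: f_def)
    have "(\<Sum>ob\<in>up. p' i ob + \<omega>' i ob) = (\<Sum>ob\<in>up. (p i ob + \<omega> i ob)
      - ((if ob \<in> Od then f ob else 0) + (if ob \<in> Otil_i I Os R p Od i then f ob else 0)
           - (if ob \<in> Ob then \<gamma> i ob * xi i else 0)))"
      by (rule sum.cong) (use change i True upOs in \<open>auto simp: f_def\<close>)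
    also have "\<dots> = (\<Sum>ob\<in>up. p i ob + \<omega> i ob) - (sum f (up \<inter> Od)
      + sum f (up \<inter> Otil_i I Os R p Od i) - (\<Sum>ob\<in>up \<inter> Ob. \<gamma> i ob * xi i))"
      by (simp add: sum_subtractf sum.distrib sum.inter_restrict[OF finup])
    finally have E: "(\<Sum>ob\<in>up. p' i ob + \<omega>' i ob) = (\<Sum>ob\<in>up. p i ob + \<omega> i ob) - (sum f (up \<inter> Od)
      + sum f (up \<inter> Otil_i I Os R p Od i) - (\<Sum>ob\<in>up \<inter> Ob. \<gamma> i ob * xi i))" .
    have L1: "sum f (up \<inter> Od) \<le> sum f Od"
      by (rule sum_mono2[OF finOd]) (use fnn Od_sub_Ob in auto)
    have L2: "sum f (up \<inter> Otil_i I Os R p Od i) \<le> sum f (Otil_i I Os R p Od i)"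
      by (rule sum_mono2[OF finOti]) (use fnn Oti_sub Ot_sub_Ob in auto)
    have XI: "xi i = sum f Od + sum f (Otil_i I Os R p Od i)" using xi_split[OF True] by (simp add: f_def)
    have key: "sum f (up \<inter> Od) + sum f (up \<inter> Otil_i I Os R p Od i) \<le> (\<Sum>ob\<in>up \<inter> Ob. \<gamma> i ob * xi i)"
    proof (cases "\<exists>y\<in>Ob. \<gamma> i y > 0 \<and> R i y o0")
      case True
      then obtain y where y: "y \<in> Ob" "\<gamma> i y > 0" "R i y o0" by blast
      have ybest: "\<forall>b\<in>Ob. R i y b" using gam_A \<open>i \<in> Ia\<close> y Aset_best by blast
      have "(\<Sum>ob\<in>up \<inter> Ob. \<gamma> i ob * xi i) = (\<Sum>ob\<in>Ob. \<gamma> i ob * xi i)"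
      proof (rule sum.mono_neutral_left[OF finOb])
        show "up \<inter> Ob \<subseteq> Ob" by blast
        show "\<forall>x\<in>Ob - up \<inter> Ob. \<gamma> i x * xi i = 0"
        proof
          fix x assume x: "x \<in> Ob - up \<inter> Ob"
          show "\<gamma> i x * xi i = 0"
          proof (rule ccontr)
            assume "\<gamma> i x * xi i \<noteq> 0"
            then have "\<gamma> i x > 0" using gam_nn \<open>i \<in> Ia\<close> x by (metis DiffD1 less_eq_real_def mult_zero_left)
            then have "\<forall>b\<in>Ob. R i x b" using gam_A \<open>i \<in> Ia\<close> x Aset_best by blast
            then have "R i x y" using y by blast
            moreover have "x \<in> Os" "y \<in> Os" using x y Ob_sub by auto
            ultimately have "R i x o0" using transR[OF i _ _ o0] y(3) by blast
            then show False using x Ob_sub by (auto simp: up_def)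
          qed
        qed
      qed
      also have "\<dots> = xi i" using gam_sum \<open>i \<in> Ia\<close> by (simp add: sum_distrib_right[symmetric])
      finally show ?thesis using L1 L2 XI by linarith
    next
      case False
      obtain y where y: "y \<in> Ob" "\<gamma> i y > 0"
      proof (rule ccontr)
        assume "\<not> thesis"
        then have "\<forall>y\<in>Ob. \<gamma> i y \<le> 0" using that by force
        then have "(\<Sum>ob\<in>Ob. \<gamma> i ob) \<le> 0" by (simp add: sum_nonpos)
        then show False using gam_sum \<open>i \<in> Ia\<close> by simp
      qed
      have ybest: "\<forall>b\<in>Ob. R i y b" using gam_A \<open>i \<in> Ia\<close> y Aset_best by blast
      have "up \<inter> Ob = {}"
      proof (rule ccontr)
        assume "up \<inter> Ob \<noteq> {}"
        then obtain x where x: "x \<in> up" "x \<in> Ob" by blast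
        have "R i y x" using ybest x by blast
        moreover have "R i x o0" "x \<in> Os" "y \<in> Os" using x y Ob_sub by (auto simp: up_def)
        ultimately have "R i y o0" using transR[OF i _ _ o0] by blast
        then show False using False y by blast
      qed
      then have "up \<inter> Od = {}" "up \<inter> Otil_i I Os R p Od i = {}" using Od_sub_Ob Oti_sub Ot_sub_Ob by blast+
      then show ?thesis using \<open>up \<inter> Ob = {}\<close> by simp
    qed
    show "(\<Sum>ob\<in>up. p' i ob + \<omega>' i ob) \<ge> (\<Sum>ob\<in>up. p i ob + \<omega> i ob)"
      using E key by linarith
  qed
qed


end


lemma exists_bottom:
  assumes fin: "finite S" and ne: "S \<noteq> {}"
    and tot: "\<forall>a\<in>S. \<forall>b\<in>S. Q a b \<or> Q b a"
    and tr: "\<forall>a\<in>S. \<forall>b\<in>S. \<forall>c\<in>S. Q a b \<longrightarrow> Q b c \<longrightarrow> Q a c"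
  shows "\<exists>m\<in>S. \<forall>x\<in>S. Q x m"
proof -
  define f where "f m = card {x\<in>S. Q x m}" for m
  have "Max (f ` S) \<in> f ` S" using fin ne by (intro Max_in) auto
  then obtain m where m1: "m \<in> S" and m2: "Max (f ` S) = f m" unfolding image_iff by blast
  have m3: "\<forall>x\<in>S. f x \<le> f m"
  proof
    fix x assume "x \<in> S"
    then have "f x \<le> Max (f ` S)" using fin by (intro Max_ge) auto
    then show "f x \<le> f m" using m2 by simp
  qed
  have "\<forall>x\<in>S. Q x m"
  proof (rule ccontr)
    assume "\<not> (\<forall>x\<in>S. Q x m)"
    then obtain x where x: "x \<in> S" "\<not> Q x m" by blast
    then have Qmx: "Q m x" using tot[rule_format, of x m] m1 by blast
    have sub: "{y\<in>S. Q y m} \<subset> {y\<in>S. Q y x}"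
    proof
      show "{y\<in>S. Q y m} \<subseteq> {y\<in>S. Q y x}"
      proof
        fix y assume "y \<in> {y\<in>S. Q y m}"
        then have "y \<in> S" "Q y m" by auto
        then have "Q y x" using tr[rule_format, of y m x] Qmx m1 x(1) by blast
        then show "y \<in> {y\<in>S. Q y x}" using \<open>y \<in> S\<close> by simp
      qed
      have "Q x x" using tot[rule_format, of x x] x(1) by blast
      then have "x \<in> {y\<in>S. Q y x}" using x(1) by simp
      moreover have "x \<notin> {y\<in>S. Q y m}" using x(2) by simp
      ultimately show "{y\<in>S. Q y m} \<noteq> {y\<in>S. Q y x}" by blast
    qed
    have "card {y\<in>S. Q y m} < card {y\<in>S. Q y x}" by (rule psubset_card_mono) (use fin sub in auto)
    then have "f m < f x" by (simp add: f_def)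
    then show False using m3 x(1) by force
  qed
  then show ?thesis using m1 by blast
qed

lemma layer:
  assumes "finite S"
    and "\<forall>a\<in>S. \<forall>b\<in>S. Q a b \<or> Q b a"
    and "\<forall>a\<in>S. \<forall>b\<in>S. \<forall>c\<in>S. Q a b \<longrightarrow> Q b c \<longrightarrow> Q a c"
    and "\<forall>a\<in>S. \<forall>b\<in>S. Q a b \<longrightarrow> u b \<le> u a"
    and "\<forall>a\<in>S. 0 \<le> u a"
    and "\<forall>ob\<in>S. (\<Sum>x\<in>{x\<in>S. Q x ob}. d x) \<ge> (0::real)"
  shows "(\<Sum>x\<in>S. u x * d x) \<ge> 0 \<and>
     ((\<forall>a\<in>S. 0 < u a) \<and> (\<forall>a\<in>S. \<forall>b\<in>S. Q a b \<and> \<not> Q b a \<longrightarrow> u b < u a) \<and>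
       (\<exists>ob\<in>S. (\<Sum>x\<in>{x\<in>S. Q x ob}. d x) > 0) \<longrightarrow> (\<Sum>x\<in>S. u x * d x) > 0)"
  using assms
proof (induction "card S" arbitrary: S u rule: less_induct)
  case less
  note fin = less.prems(1) and tot = less.prems(2) and tr = less.prems(3)
    and mono = less.prems(4) and nn = less.prems(5) and sd = less.prems(6)
  show ?case
  proof (cases "S = {}")
    case True then show ?thesis by simp
  next
    case False
    obtain m where m: "m \<in> S" "\<forall>x\<in>S. Q x m" using exists_bottom[OF fin False tot tr] by blast
    define C where "C = {x\<in>S. Q m x}"
    define S' where "S' = S - C"
    define um where "um = u m"
    have mC: "m \<in> C" using m tot by (auto simp: C_def)
    have finS': "finite S'" using fin by (simp add: S'_def)
    have "S' \<subset> S" using mC m(1) by (auto simp: S'_def C_def)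
    then have cardlt: "card S' < card S" by (rule psubset_card_mono[OF fin])
    have uC: "\<forall>x\<in>C. u x = um"
    proof
      fix x assume "x \<in> C"
      then have x: "x \<in> S" "Q m x" by (auto simp: C_def)
      have "u x \<le> u m" using mono x m(1) by blast
      moreover have "u m \<le> u x" using mono x m by blast
      ultimately show "u x = um" by (simp add: um_def)
    qed
    have umin: "\<forall>x\<in>S. um \<le> u x"
    proof
      fix x assume x: "x \<in> S"
      then have "Q x m" using m by blast
      then show "um \<le> u x" using mono x m(1) unfolding um_def by blast
    qed
    have upS': "\<forall>ob\<in>S'. {x\<in>S. Q x ob} = {x\<in>S'. Q x ob}"
    proof
      fix ob assume ob: "ob \<in> S'"
      show "{x\<in>S. Q x ob} = {x\<in>S'. Q x ob}"
      proof (rule set_eqI, rule iffI)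
        fix x assume x: "x \<in> {x\<in>S. Q x ob}"
        have "x \<notin> C"
        proof
          assume "x \<in> C"
          then have "Q m x" "x \<in> S" "Q x ob" "ob \<in> S" using x ob by (auto simp: C_def S'_def)
          then have "Q m ob" using tr[rule_format, of m x ob] m(1) by blast
          then show False using ob by (auto simp: C_def S'_def)
        qed
        then show "x \<in> {x\<in>S'. Q x ob}" using x by (auto simp: S'_def)
      qed (auto simp: S'_def)
    qed
    define u' where "u' x = u x - um" for x
    have IH: "(\<Sum>x\<in>S'. u' x * d x) \<ge> 0 \<and>
     ((\<forall>a\<in>S'. 0 < u' a) \<and> (\<forall>a\<in>S'. \<forall>b\<in>S'. Q a b \<and> \<not> Q b a \<longrightarrow> u' b < u' a) \<and>
       (\<exists>ob\<in>S'. (\<Sum>x\<in>{x\<in>S'. Q x ob}. d x) > 0) \<longrightarrow> (\<Sum>x\<in>S'. u' x * d x) > 0)"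
    proof (rule less.hyps[OF cardlt finS'])
      have SS: "S' \<subseteq> S" by (auto simp: S'_def)
      show "\<forall>a\<in>S'. \<forall>b\<in>S'. Q a b \<or> Q b a" using tot SS by blast
      show "\<forall>a\<in>S'. \<forall>b\<in>S'. \<forall>c\<in>S'. Q a b \<longrightarrow> Q b c \<longrightarrow> Q a c"
        using SS by (intro ballI impI) (rule tr[rule_format], auto)
      show "\<forall>a\<in>S'. \<forall>b\<in>S'. Q a b \<longrightarrow> u' b \<le> u' a"
        using SS by (intro ballI impI) (simp add: u'_def, rule mono[rule_format], auto)
      show "\<forall>a\<in>S'. 0 \<le> u' a" using umin SS by (simp add: u'_def subset_iff)
      show "\<forall>ob\<in>S'. 0 \<le> (\<Sum>x\<in>{x\<in>S'. Q x ob}. d x)"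
      proof
        fix ob assume ob: "ob \<in> S'"
        then have "0 \<le> (\<Sum>x\<in>{x\<in>S. Q x ob}. d x)" using sd SS by blast
        then show "0 \<le> (\<Sum>x\<in>{x\<in>S'. Q x ob}. d x)" using upS' ob by simp
      qed
    qed
    have upm: "{x\<in>S. Q x m} = S" using m by auto
    have totd: "(\<Sum>x\<in>S. d x) \<ge> 0" using sd m upm by force
    have split: "(\<Sum>x\<in>S. u x * d x) = um * (\<Sum>x\<in>S. d x) + (\<Sum>x\<in>S'. u' x * d x)"
    proof -
      have "(\<Sum>x\<in>S. u x * d x) = (\<Sum>x\<in>S. um * d x + u' x * d x)"
        by (simp add: u'_def algebra_simps)
      also have "\<dots> = um * (\<Sum>x\<in>S. d x) + (\<Sum>x\<in>S. u' x * d x)"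
        by (simp add: sum.distrib sum_distrib_left)
      also have "(\<Sum>x\<in>S. u' x * d x) = (\<Sum>x\<in>S'. u' x * d x)"
        by (rule sum.mono_neutral_right[OF fin]) (use uC in \<open>auto simp: S'_def u'_def\<close>)
      finally show ?thesis .
    qed
    have um0: "um \<ge> 0" using nn m by (simp add: um_def)
    have weak: "(\<Sum>x\<in>S. u x * d x) \<ge> 0" using split IH totd um0 by simp
    show ?thesis
    proof (intro conjI impI)
      show "(\<Sum>x\<in>S. u x * d x) \<ge> 0" by (rule weak)
    next
      assume st: "(\<forall>a\<in>S. 0 < u a) \<and> (\<forall>a\<in>S. \<forall>b\<in>S. Q a b \<and> \<not> Q b a \<longrightarrow> u b < u a) \<and>
       (\<exists>ob\<in>S. (\<Sum>x\<in>{x\<in>S. Q x ob}. d x) > 0)"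
      then obtain ob where ob: "ob \<in> S" "(\<Sum>x\<in>{x\<in>S. Q x ob}. d x) > 0" by blast
      have um_pos: "um > 0" using st m by (simp add: um_def)
      show "(\<Sum>x\<in>S. u x * d x) > 0"
      proof (cases "ob \<in> C")
        case True
        have "{x\<in>S. Q x ob} = S"
        proof (intro set_eqI iffI)
          fix x assume x: "x \<in> S"
          have "Q m ob" using True by (simp add: C_def)
          then show "x \<in> {x\<in>S. Q x ob}" using tr[rule_format, of x m ob] x m True by (auto simp: C_def)
        qed simp
        then have "(\<Sum>x\<in>S. d x) > 0" using ob by simp
        then have "um * (\<Sum>x\<in>S. d x) > 0" using um_pos by simp
        then show ?thesis using split IH by linarith
      next
        case False
        then have obS': "ob \<in> S'" using ob by (simp add: S'_def)
        have "\<forall>a\<in>S'. 0 < u' a"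
        proof
          fix a assume a: "a \<in> S'"
          then have "Q a m \<and> \<not> Q m a" "a \<in> S" using m by (auto simp: S'_def C_def)
          then have "u m < u a" using st m(1) by blast
          then show "0 < u' a" by (simp add: u'_def um_def)
        qed
        moreover have "\<forall>a\<in>S'. \<forall>b\<in>S'. Q a b \<and> \<not> Q b a \<longrightarrow> u' b < u' a"
        proof (intro ballI impI)
          fix a b assume "a \<in> S'" "b \<in> S'" "Q a b \<and> \<not> Q b a"
          then have "a \<in> S" "b \<in> S" by (auto simp: S'_def)
          then have "u b < u a" using st \<open>Q a b \<and> \<not> Q b a\<close> by blast
          then show "u' b < u' a" by (simp add: u'_def)
        qed
        moreover have "\<exists>ob\<in>S'. (\<Sum>x\<in>{x\<in>S'. Q x ob}. d x) > 0"
          using obS' ob upS' by auto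
        ultimately have "(\<Sum>x\<in>S'. u' x * d x) > 0" using IH by blast
        then show ?thesis using split totd um0 by (simp add: add_nonneg_pos)
      qed
    qed
  qed
qed



definition INV where
  "INV I Os R \<omega>0 \<omega> p Od \<longleftrightarrow> Od \<subseteq> Os \<and> (\<forall>i\<in>I. \<forall>ob\<in>Os. 0 \<le> \<omega> i ob) \<and> (\<forall>i\<in>I. \<forall>ob\<in>Os. 0 \<le> p i ob)
     \<and> (\<forall>i\<in>I. \<forall>ob\<in>Os - Od. \<omega> i ob = 0)
     \<and> (\<forall>i\<in>I. \<forall>x\<in>Os. p i x > 0 \<longrightarrow> (\<forall>b\<in>Obar I Os R p Od. R i x b))
     \<and> (\<forall>ob\<in>Os. (\<Sum>i\<in>I. p i ob + \<omega> i ob) = quota I \<omega>0 ob)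
     \<and> (\<forall>i\<in>I. (\<Sum>ob\<in>Os. p i ob + \<omega> i ob) = (\<Sum>ob\<in>Os. \<omega>0 i ob))
     \<and> (\<forall>i\<in>I. sd_geq Os R i (\<lambda>ob. p i ob + \<omega> i ob) (\<omega>0 i))"

lemma sd_geq_trans: "sd_geq Os R i a b \<Longrightarrow> sd_geq Os R i b c \<Longrightarrow> sd_geq Os R i a c"
  unfolding sd_geq_def by (meson order_trans)

lemma step_to_locale:
  assumes fee: "fee_problem I Os R \<omega>0"
    and inv: "INV I Os R \<omega>0 \<omega> p Od"
    and st: "fttc_step I Os R (\<omega>, p, Od) (\<omega>', p', Od')"
  shows "\<exists>lam \<beta> \<gamma> xi xo. fstep I Os R \<omega> p \<omega>' p' Od Od' lam \<beta> \<gamma> xi xo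
           (active I Os R \<omega> p Od) (Obar I Os R p Od) (Otil I Os R p Od)"
proof -
  have E: "\<exists>lam \<beta> \<gamma> xi xo. (\<forall>i\<in>active I Os R \<omega> p Od. \<forall>ob\<in>Obar I Os R p Od. lam i ob \<ge> 0) \<and>
         (\<forall>ob\<in>Obar I Os R p Od. (\<Sum>i\<in>active I Os R \<omega> p Od. lam i ob) = 1) \<and>
         (\<forall>i\<in>active I Os R \<omega> p Od. \<forall>ob\<in>Od. lam i ob > 0 \<longrightarrow> \<omega> i ob > 0) \<and>
         (\<forall>i\<in>active I Os R \<omega> p Od. \<forall>ob\<in>Otil I Os R p Od. lam i ob > 0 \<longrightarrow> ob \<in> Otil_i I Os R p Od i) \<and>
         (\<forall>i\<in>active I Os R \<omega> p Od. \<forall>ob\<in>Od. 0 \<le> \<beta> i ob \<and> \<beta> i ob \<le> \<omega> i ob) \<and>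
         (\<forall>i\<in>active I Os R \<omega> p Od. \<forall>ob\<in>Obar I Os R p Od. \<gamma> i ob \<ge> 0) \<and>
         (\<forall>i\<in>active I Os R \<omega> p Od. (\<Sum>ob\<in>Obar I Os R p Od. \<gamma> i ob) = 1) \<and>
         (\<forall>i\<in>active I Os R \<omega> p Od. \<forall>ob\<in>Obar I Os R p Od. \<gamma> i ob > 0 \<longrightarrow> ob \<in> Aset I Os R p Od i) \<and>
         trade_feasible I Os R \<omega> p Od lam \<beta> \<gamma> xi xo \<and>
         (\<forall>yi yo. trade_feasible I Os R \<omega> p Od lam \<beta> \<gamma> yi yo \<longrightarrow>
              (\<forall>i\<in>active I Os R \<omega> p Od. yi i \<le> xi i) \<and> (\<forall>ob\<in>Obar I Os R p Od. yo ob \<le> xo ob)) \<and>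
         (\<forall>i ob. \<omega>' i ob = (if i \<in> active I Os R \<omega> p Od then (if ob \<in> Od then \<omega> i ob - lam i ob * xo ob else 0)
                          else \<omega> i ob)) \<and>
         (\<forall>i ob. p' i ob = (if i \<in> active I Os R \<omega> p Od then
                           p i ob - (if ob \<in> Otil_i I Os R p Od i then lam i ob * xo ob else 0)
                                 + (if ob \<in> Obar I Os R p Od then \<gamma> i ob * xi i else 0)
                          else p i ob)) \<and>
         Od' = {ob\<in>Od. (\<Sum>i\<in>I. \<omega>' i ob) > 0}"
    using st unfolding fttc_step_def Let_def prod.case by (rule conjunct2)
  then obtain lam \<beta> \<gamma> xi xo where
    A: "(\<forall>i\<in>active I Os R \<omega> p Od. \<forall>ob\<in>Obar I Os R p Od. lam i ob \<ge> 0) \<and>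
         (\<forall>ob\<in>Obar I Os R p Od. (\<Sum>i\<in>active I Os R \<omega> p Od. lam i ob) = 1) \<and>
         (\<forall>i\<in>active I Os R \<omega> p Od. \<forall>ob\<in>Od. lam i ob > 0 \<longrightarrow> \<omega> i ob > 0) \<and>
         (\<forall>i\<in>active I Os R \<omega> p Od. \<forall>ob\<in>Otil I Os R p Od. lam i ob > 0 \<longrightarrow> ob \<in> Otil_i I Os R p Od i) \<and>
         (\<forall>i\<in>active I Os R \<omega> p Od. \<forall>ob\<in>Od. 0 \<le> \<beta> i ob \<and> \<beta> i ob \<le> \<omega> i ob) \<and>
         (\<forall>i\<in>active I Os R \<omega> p Od. \<forall>ob\<in>Obar I Os R p Od. \<gamma> i ob \<ge> 0) \<and>
         (\<forall>i\<in>active I Os R \<omega> p Od. (\<Sum>ob\<in>Obar I Os R p Od. \<gamma> i ob) = 1) \<and>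
         (\<forall>i\<in>active I Os R \<omega> p Od. \<forall>ob\<in>Obar I Os R p Od. \<gamma> i ob > 0 \<longrightarrow> ob \<in> Aset I Os R p Od i) \<and>
         trade_feasible I Os R \<omega> p Od lam \<beta> \<gamma> xi xo \<and>
         (\<forall>yi yo. trade_feasible I Os R \<omega> p Od lam \<beta> \<gamma> yi yo \<longrightarrow>
              (\<forall>i\<in>active I Os R \<omega> p Od. yi i \<le> xi i) \<and> (\<forall>ob\<in>Obar I Os R p Od. yo ob \<le> xo ob)) \<and>
         (\<forall>i ob. \<omega>' i ob = (if i \<in> active I Os R \<omega> p Od then (if ob \<in> Od then \<omega> i ob - lam i ob * xo ob else 0)
                          else \<omega> i ob)) \<and>
         (\<forall>i ob. p' i ob = (if i \<in> active I Os R \<omega> p Od then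
                           p i ob - (if ob \<in> Otil_i I Os R p Od i then lam i ob * xo ob else 0)
                                 + (if ob \<in> Obar I Os R p Od then \<gamma> i ob * xi i else 0)
                          else p i ob)) \<and>
         Od' = {ob\<in>Od. (\<Sum>i\<in>I. \<omega>' i ob) > 0}"
    by (elim exE)
  have F: "(\<forall>i\<in>active I Os R \<omega> p Od. xi i \<ge> 0) \<and> (\<forall>ob\<in>Obar I Os R p Od. xo ob \<ge> 0) \<and>
       (\<forall>ob\<in>Obar I Os R p Od. xo ob = (\<Sum>i\<in>active I Os R \<omega> p Od. \<gamma> i ob * xi i)) \<and>
       (\<forall>i\<in>active I Os R \<omega> p Od. xi i = (\<Sum>ob\<in>Obar I Os R p Od. lam i ob * xo ob)) \<and>
       (\<forall>i\<in>active I Os R \<omega> p Od. \<forall>ob\<in>Od. lam i ob * xo ob \<le> \<beta> i ob) \<and>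
       (\<forall>i\<in>active I Os R \<omega> p Od. \<forall>ob\<in>Otil I Os R p Od. lam i ob * xo ob \<le> p i ob)"
    using A unfolding trade_feasible_def Let_def by blast
  have "fstep I Os R \<omega> p \<omega>' p' Od Od' lam \<beta> \<gamma> xi xo
           (active I Os R \<omega> p Od) (Obar I Os R p Od) (Otil I Os R p Od)"
  proof -
    have tot: "\<forall>i\<in>I. \<forall>a\<in>Os. \<forall>b\<in>Os. R i a b \<or> R i b a" using fee unfolding fee_problem_def by blast
    have tr: "\<forall>i\<in>I. \<forall>a\<in>Os. \<forall>b\<in>Os. \<forall>c\<in>Os. R i a b \<longrightarrow> R i b c \<longrightarrow> R i a c"
      using fee unfolding fee_problem_def by blast
    have fin: "finite I" "finite Os" using fee unfolding fee_problem_def by blast+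
    show ?thesis
      using fin tot tr inv A F unfolding INV_def fstep_def
      by (elim conjE) (intro conjI; (assumption | rule refl))
  qed
  then show ?thesis by blast
qed



lemma step_INV:
  assumes fee: "fee_problem I Os R \<omega>0"
    and inv: "INV I Os R \<omega>0 \<omega> p Od"
    and st: "fttc_step I Os R (\<omega>, p, Od) (\<omega>', p', Od')"
  shows "INV I Os R \<omega>0 \<omega>' p' Od' \<and> Obar I Os R p' Od' \<subseteq> Obar I Os R p Od \<and>
     (\<forall>i\<in>I. \<forall>x\<in>Os. p' i x > 0 \<longrightarrow> p i x \<le> 0 \<longrightarrow> x \<in> Obar I Os R p Od \<and> (\<forall>b\<in>Obar I Os R p Od. R i x b))"
proof -
  obtain lam \<beta> \<gamma> xi xo where L: "fstep I Os R \<omega> p \<omega>' p' Od Od' lam \<beta> \<gamma> xi xo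
           (active I Os R \<omega> p Od) (Obar I Os R p Od) (Otil I Os R p Od)"
    using step_to_locale[OF fee inv st] by (elim exE)
  interpret L: fstep I Os R \<omega> p \<omega>' p' Od Od' lam \<beta> \<gamma> xi xo
           "active I Os R \<omega> p Od" "Obar I Os R p Od" "Otil I Os R p Od" by (rule L)
  have i1: "Od \<subseteq> Os" using inv unfolding INV_def by (elim conjE) assumption
  have i6: "\<forall>ob\<in>Os. (\<Sum>i\<in>I. p i ob + \<omega> i ob) = quota I \<omega>0 ob"
    using inv unfolding INV_def by (elim conjE) assumption
  have i7: "\<forall>i\<in>I. (\<Sum>ob\<in>Os. p i ob + \<omega> i ob) = (\<Sum>ob\<in>Os. \<omega>0 i ob)"
    using inv unfolding INV_def by (elim conjE) assumption
  have i8: "\<forall>i\<in>I. sd_geq Os R i (\<lambda>ob. p i ob + \<omega> i ob) (\<omega>0 i)"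
    using inv unfolding INV_def by (elim conjE) assumption
  have "INV I Os R \<omega>0 \<omega>' p' Od'"
    unfolding INV_def
  proof (intro conjI)
    show "Od' \<subseteq> Os" using L.Od'_sub i1 by blast
    show "\<forall>i\<in>I. \<forall>ob\<in>Os. 0 \<le> \<omega>' i ob" by (rule L.om'_nn)
    show "\<forall>i\<in>I. \<forall>ob\<in>Os. 0 \<le> p' i ob" by (rule L.p'_nn)
    show "\<forall>i\<in>I. \<forall>ob\<in>Os - Od'. \<omega>' i ob = 0" by (rule L.om'_zero)
    show "\<forall>i\<in>I. \<forall>x\<in>Os. p' i x > 0 \<longrightarrow> (\<forall>b\<in>Obar I Os R p' Od'. R i x b)" by (rule L.H')
    show "\<forall>ob\<in>Os. (\<Sum>i\<in>I. p' i ob + \<omega>' i ob) = quota I \<omega>0 ob" using L.col i6 by simp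
    show "\<forall>i\<in>I. (\<Sum>ob\<in>Os. p' i ob + \<omega>' i ob) = (\<Sum>ob\<in>Os. \<omega>0 i ob)" using L.row i7 by simp
    show "\<forall>i\<in>I. sd_geq Os R i (\<lambda>ob. p' i ob + \<omega>' i ob) (\<omega>0 i)"
    proof
      fix i assume i: "i \<in> I"
      show "sd_geq Os R i (\<lambda>ob. p' i ob + \<omega>' i ob) (\<omega>0 i)"
        by (rule sd_geq_trans[OF L.sd_step[OF i] bspec[OF i8 i]])
    qed
  qed
  moreover have "Obar I Os R p' Od' \<subseteq> Obar I Os R p Od" by (rule L.Obar_mono)
  moreover have "\<forall>i\<in>I. \<forall>x\<in>Os. p' i x > 0 \<longrightarrow> p i x \<le> 0 \<longrightarrow> x \<in> Obar I Os R p Od \<and> (\<forall>b\<in>Obar I Os R p Od. R i x b)"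
    by (intro ballI impI) (rule L.acq)
  ultimately show ?thesis by (intro conjI)
qed



locale frun =
  fixes I :: "'i set" and Os :: "'o set" and R :: "'i \<Rightarrow> 'o \<Rightarrow> 'o \<Rightarrow> bool"
    and \<omega>0 :: "'i \<Rightarrow> 'o \<Rightarrow> real" and s :: "nat \<Rightarrow> ('i \<Rightarrow> 'o \<Rightarrow> real) \<times> ('i \<Rightarrow> 'o \<Rightarrow> real) \<times> 'o set"
    and n :: nat
  assumes fee: "fee_problem I Os R \<omega>0"
    and s0: "s 0 = (\<omega>0, (\<lambda>_ _. 0), Os)"
    and steps: "\<forall>d<n. fttc_step I Os R (s d) (s (Suc d))"
begin

abbreviation W where "W d \<equiv> fst (s d)"
abbreviation P where "P d \<equiv> fst (snd (s d))"
abbreviation D where "D d \<equiv> snd (snd (s d))"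
abbreviation Ob where "Ob d \<equiv> Obar I Os R (P d) (D d)"

lemma st: "d < n \<Longrightarrow> fttc_step I Os R (W d, P d, D d) (W (Suc d), P (Suc d), D (Suc d))"
  using steps by simp

lemma inv0: "INV I Os R \<omega>0 (W 0) (P 0) (D 0)"
  unfolding INV_def s0
proof (simp, intro conjI)
  show "\<forall>i\<in>I. \<forall>ob\<in>Os. 0 \<le> \<omega>0 i ob" using fee unfolding fee_problem_def by blast
  show "\<forall>ob\<in>Os. (\<Sum>i\<in>I. \<omega>0 i ob) = quota I \<omega>0 ob" by (simp add: quota_def)
  show "\<forall>i\<in>I. sd_geq Os R i (\<omega>0 i) (\<omega>0 i)" by (simp add: sd_geq_def)
qed

lemma inv_all: "d \<le> n \<Longrightarrow> INV I Os R \<omega>0 (W d) (P d) (D d)"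
proof (induction d)
  case 0 show ?case by (rule inv0)
next
  case (Suc d)
  then have "d < n" by simp
  then show ?case using step_INV[OF fee Suc.IH st] \<open>d < n\<close> by simp
qed

lemma mono1: "d < n \<Longrightarrow> Ob (Suc d) \<subseteq> Ob d"
  using step_INV[OF fee inv_all st] by simp

lemma acq1: "d < n \<Longrightarrow> i \<in> I \<Longrightarrow> x \<in> Os \<Longrightarrow> P (Suc d) i x > 0 \<Longrightarrow> P d i x \<le> 0 \<Longrightarrow>
    x \<in> Ob d \<and> (\<forall>b\<in>Ob d. R i x b)"
  using step_INV[OF fee inv_all st] by simp

lemma mono: "d \<le> d' \<Longrightarrow> d' \<le> n \<Longrightarrow> Ob d' \<subseteq> Ob d"
proof (induction d' rule: dec_induct)
  case base then show ?case by simp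
next
  case (step m) then show ?case using mono1[of m] by simp
qed

lemma acq_ex: "d \<le> d' \<Longrightarrow> d' \<le> n \<Longrightarrow> i \<in> I \<Longrightarrow> x \<in> Os \<Longrightarrow> P d i x \<le> 0 \<Longrightarrow> P d' i x > 0 \<Longrightarrow>
   \<exists>t. d \<le> t \<and> t < d' \<and> x \<in> Ob t \<and> (\<forall>b\<in>Ob t. R i x b)"
proof (induction d' rule: dec_induct)
  case base then show ?case by simp
next
  case (step m)
  show ?case
  proof (cases "P m i x > 0")
    case True
    then obtain t where "d \<le> t \<and> t < m \<and> x \<in> Ob t \<and> (\<forall>b\<in>Ob t. R i x b)" using step by auto
    then show ?thesis by (intro exI[of _ t]) simp
  next
    case False
    then have "x \<in> Ob m \<and> (\<forall>b\<in>Ob m. R i x b)" using acq1[of m i x] step by simp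
    then show ?thesis using step by (intro exI[of _ m]) simp
  qed
qed

lemma P0: "P 0 i x = 0" using s0 by simp

definition dead where "dead ob = {d. d < n \<and> ob \<notin> Ob d}"
definition price where "price ob = real (1 + card (dead ob))"

lemma fin_dead: "finite (dead ob)" unfolding dead_def by simp

lemma tot_i: "i \<in> I \<Longrightarrow> \<forall>a\<in>Os. \<forall>b\<in>Os. R i a b \<or> R i b a"
  using fee unfolding fee_problem_def by blast
lemma trans_i: "i \<in> I \<Longrightarrow> \<forall>a\<in>Os. \<forall>b\<in>Os. \<forall>c\<in>Os. R i a b \<longrightarrow> R i b c \<longrightarrow> R i a c"
  using fee unfolding fee_problem_def by blast

lemma price_prop:
  assumes i: "i \<in> I" and sO: "x \<in> Os" and px: "P n i x > 0" and oO: "ob \<in> Os" and R: "R i ob x"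
  shows "price ob \<ge> price x \<and> (\<not> R i x ob \<longrightarrow> price ob > price x)"
proof -
  obtain t where t: "t < n" "x \<in> Ob t" "\<forall>b\<in>Ob t. R i x b"
    using acq_ex[of 0 n i x] i sO px P0 by auto
  show ?thesis
  proof (cases "R i x ob")
    case False
    have sub: "dead x \<subseteq> dead ob"
    proof
      fix d assume d: "d \<in> dead x"
      then have dn: "d < n" "x \<notin> Ob d" by (auto simp: dead_def)
      have "t < d"
      proof (rule ccontr)
        assume "\<not> t < d"
        then have "Ob t \<subseteq> Ob d" using mono[of d t] t by simp
        then show False using t dn by blast
      qed
      then have "Ob d \<subseteq> Ob t" using mono[of t d] dn by simp
      then have "ob \<notin> Ob d" using t False by blast
      then show "d \<in> dead ob" using dn by (simp add: dead_def)
    qed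
    have "t \<in> dead ob" using t False by (auto simp: dead_def)
    moreover have "t \<notin> dead x" using t by (simp add: dead_def)
    ultimately have "dead x \<subset> dead ob" using sub by blast
    then have "card (dead x) < card (dead ob)" by (rule psubset_card_mono[OF fin_dead])
    then show ?thesis using False by (simp add: price_def)
  next
    case True
    have "dead x \<subseteq> dead ob"
    proof
      fix d assume d: "d \<in> dead x"
      then have dn: "d < n" "x \<notin> Ob d" by (auto simp: dead_def)
      have "ob \<notin> Ob d"
      proof
        assume oOb: "ob \<in> Ob d"
        have invd: "INV I Os R \<omega>0 (W d) (P d) (D d)" using inv_all dn by simp
        show False
        proof (cases "P d i x > 0")
          case True2: True
          have "D d \<subseteq> Os" and H: "\<forall>x\<in>Os. P d i x > 0 \<longrightarrow> (\<forall>b\<in>Ob d. R i x b)"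
            using invd i unfolding INV_def by blast+
          have "indiff R i ob x" using R True by (simp add: indiff_def)
          then have "x \<in> Ob d"
            using closure[OF \<open>D d \<subseteq> Os\<close> i trans_i[OF i] oOb sO True2 _ H] by blast
          then show False using dn by blast
        next
          case False
          then obtain t' where "d \<le> t'" "t' < n" "x \<in> Ob t'" using acq_ex[of d n i x] dn i sO px by auto
          then have "x \<in> Ob d" using mono[of d t'] by auto
          then show False using dn by blast
        qed
      qed
      then show "d \<in> dead ob" using dn by (simp add: dead_def)
    qed
    then have "card (dead x) \<le> card (dead ob)" by (rule card_mono[OF fin_dead])
    then show ?thesis using True by (simp add: price_def)
  qed
qed

end



locale effctx =
  fixes I :: "'i set" and Os :: "'z set" and R :: "'i \<Rightarrow> 'z \<Rightarrow> 'z \<Rightarrow> bool"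
    and p :: "'i \<Rightarrow> 'z \<Rightarrow> real" and pr :: "'z \<Rightarrow> nat"
  assumes finI: "finite I" and finOs: "finite Os"
    and tot: "\<forall>i\<in>I. \<forall>a\<in>Os. \<forall>b\<in>Os. R i a b \<or> R i b a"
    and trans: "\<forall>i\<in>I. \<forall>a\<in>Os. \<forall>b\<in>Os. \<forall>c\<in>Os. R i a b \<longrightarrow> R i b c \<longrightarrow> R i a c"
    and pr1: "\<forall>ob\<in>Os. pr ob \<ge> 1"
    and pp: "\<forall>i\<in>I. \<forall>x\<in>Os. p i x > 0 \<longrightarrow>
               (\<forall>ob\<in>Os. R i ob x \<longrightarrow> pr ob \<ge> pr x \<and> (\<not> R i x ob \<longrightarrow> pr ob > pr x))"
begin

definition Up where "Up i z = {x\<in>Os. R i x z}"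
definition M where "M i z = Min ((\<lambda>x. real (pr x)) ` Up i z)"
definition supp where "supp i z \<longleftrightarrow> (\<exists>s\<in>Os. p i s > 0 \<and> R i z s \<and> R i s z)"
definition h where "h i z = (if supp i z then 0 else real (card (Up i z)))"
definition u where "u i z = M i z - h i z / (real (card Os) + 1)"

lemma transR: "i \<in> I \<Longrightarrow> a \<in> Os \<Longrightarrow> b \<in> Os \<Longrightarrow> c \<in> Os \<Longrightarrow> R i a b \<Longrightarrow> R i b c \<Longrightarrow> R i a c"
  using trans by blast
lemma reflR: "i \<in> I \<Longrightarrow> a \<in> Os \<Longrightarrow> R i a a"
  using tot by blast

lemma finUp: "finite (Up i z)" using finOs by (simp add: Up_def)
lemma inUp: "i \<in> I \<Longrightarrow> z \<in> Os \<Longrightarrow> z \<in> Up i z" using reflR by (simp add: Up_def)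
lemma UpOs: "Up i z \<subseteq> Os" by (auto simp: Up_def)

lemma M_in: "i \<in> I \<Longrightarrow> z \<in> Os \<Longrightarrow> \<exists>x\<in>Up i z. M i z = real (pr x)"
proof -
  assume "i \<in> I" "z \<in> Os"
  then have "Up i z \<noteq> {}" using inUp by blast
  then have "M i z \<in> (\<lambda>x. real (pr x)) ` Up i z" unfolding M_def using finUp by (intro Min_in) auto
  then show ?thesis by auto
qed

lemma M_le: "i \<in> I \<Longrightarrow> x \<in> Up i z \<Longrightarrow> M i z \<le> real (pr x)"
  unfolding M_def using finUp by (intro Min_le) auto

lemma M_ge1: "i \<in> I \<Longrightarrow> z \<in> Os \<Longrightarrow> M i z \<ge> 1"
  using M_in[of i z] pr1 UpOs by force

lemma h_bounds: "0 \<le> h i z" "h i z \<le> real (card Os)"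
proof -
  show "0 \<le> h i z" by (simp add: h_def)
  have "card (Up i z) \<le> card Os" using UpOs finOs by (rule card_mono[rotated])
  then show "h i z \<le> real (card Os)" by (simp add: h_def)
qed

lemma frac_lt1: "h i z / (real (card Os) + 1) < 1"
  using h_bounds[of i z] by (simp add: divide_less_eq)

lemma u_le: "i \<in> I \<Longrightarrow> z \<in> Os \<Longrightarrow> u i z \<le> real (pr z)"
proof -
  assume a: "i \<in> I" "z \<in> Os"
  have "M i z \<le> real (pr z)" using M_le[OF a(1) inUp[OF a]] .
  moreover have "h i z / (real (card Os) + 1) \<ge> 0" using h_bounds[of i z] by simp
  ultimately show ?thesis by (simp add: u_def)
qed

lemma u_pos: "i \<in> I \<Longrightarrow> z \<in> Os \<Longrightarrow> u i z > 0"
  using M_ge1[of i z] frac_lt1[of i z] unfolding u_def by linarith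

lemma u_supp:
  assumes i: "i \<in> I" and s: "s \<in> Os" "p i s > 0"
  shows "u i s = real (pr s)"
proof -
  have "supp i s" using s reflR[OF i s(1)] by (auto simp: supp_def)
  then have h0: "h i s = 0" by (simp add: h_def)
  have "M i s = real (pr s)" unfolding M_def
  proof (rule Min_eqI)
    show "finite ((\<lambda>x. real (pr x)) ` Up i s)" using finUp by simp
    show "real (pr s) \<in> (\<lambda>x. real (pr x)) ` Up i s" using inUp[OF i s(1)] by blast
    fix y assume "y \<in> (\<lambda>x. real (pr x)) ` Up i s"
    then obtain x where x: "x \<in> Up i s" "y = real (pr x)" by blast
    then have "x \<in> Os" "R i x s" by (auto simp: Up_def)
    then have "pr x \<ge> pr s" using pp i s by blast
    then show "real (pr s) \<le> y" using x by simp
  qed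
  then show ?thesis using h0 by (simp add: u_def)
qed

lemma Up_sub: "i \<in> I \<Longrightarrow> a \<in> Os \<Longrightarrow> b \<in> Os \<Longrightarrow> R i a b \<Longrightarrow> Up i a \<subseteq> Up i b"
  unfolding Up_def using transR by blast

lemma M_mono: "i \<in> I \<Longrightarrow> a \<in> Os \<Longrightarrow> b \<in> Os \<Longrightarrow> R i a b \<Longrightarrow> M i b \<le> M i a"
proof -
  assume a: "i \<in> I" "a \<in> Os" "b \<in> Os" "R i a b"
  have "(\<lambda>x. real (pr x)) ` Up i a \<subseteq> (\<lambda>x. real (pr x)) ` Up i b"
    using Up_sub[OF a] by (rule image_mono)
  moreover have "(\<lambda>x. real (pr x)) ` Up i a \<noteq> {}" using inUp[OF a(1,2)] by blast
  ultimately show ?thesis unfolding M_def using finUp by (intro Min_antimono) auto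
qed

lemma u_mono_strict:
  assumes i: "i \<in> I" and a: "a \<in> Os" and b: "b \<in> Os" and Rab: "R i a b"
  shows "u i b \<le> u i a \<and> (\<not> R i b a \<longrightarrow> u i b < u i a)"
proof (cases "R i b a")
  case True
  have "Up i a = Up i b" using Up_sub[OF i a b Rab] Up_sub[OF i b a True] by blast
  moreover have "supp i a = supp i b"
  proof
    assume "supp i a"
    then obtain s where s: "s \<in> Os" "p i s > 0" "R i a s" "R i s a" by (auto simp: supp_def)
    have "R i b s" using transR[OF i b a s(1) True s(3)] .
    moreover have "R i s b" using transR[OF i s(1) a b s(4) Rab] .
    ultimately show "supp i b" using s by (auto simp: supp_def)
  next
    assume "supp i b"
    then obtain s where s: "s \<in> Os" "p i s > 0" "R i b s" "R i s b" by (auto simp: supp_def)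
    have "R i a s" using transR[OF i a b s(1) Rab s(3)] .
    moreover have "R i s a" using transR[OF i s(1) b a s(4) True] .
    ultimately show "supp i a" using s by (auto simp: supp_def)
  qed
  ultimately show ?thesis using True by (simp add: u_def h_def M_def)
next
  case False
  have Mba: "M i b \<le> M i a" by (rule M_mono[OF i a b Rab])
  have strict: "u i b < u i a"
  proof (cases "M i b < M i a")
    case True
    obtain xa where xa: "M i a = real (pr xa)" using M_in[OF i a] by blast
    obtain xb where xb: "M i b = real (pr xb)" using M_in[OF i b] by blast
    have "pr xb < pr xa" using True xa xb by simp
    then have "M i b + 1 \<le> M i a" using xa xb by simp
    moreover have "u i b \<le> M i b" using h_bounds[of i b] by (simp add: u_def)
    moreover have "u i a > M i a - 1" using frac_lt1[of i a] by (simp add: u_def)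
    ultimately show ?thesis by linarith
  next
    case False2: False
    then have Meq: "M i b = M i a" using Mba by simp
    have nsupp: "\<not> supp i b"
    proof
      assume "supp i b"
      then obtain s where s: "s \<in> Os" "p i s > 0" "R i b s" "R i s b" by (auto simp: supp_def)
      have "M i b \<le> real (pr s)" using M_le[OF i] s by (simp add: Up_def)
      obtain x where x: "x \<in> Up i a" "M i a = real (pr x)" using M_in[OF i a] by blast
      have xO: "x \<in> Os" "R i x a" using x by (auto simp: Up_def)
      have "R i x s" using transR[OF i xO(1) b s(1) transR[OF i xO(1) a b xO(2) Rab] s(3)] .
      moreover have "\<not> R i s x"
      proof
        assume "R i s x"
        then have "R i s a" using transR[OF i s(1) xO(1) a _ xO(2)] by blast
        then have "R i b a" using transR[OF i b s(1) a s(3)] by blast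
        then show False using False by blast
      qed
      ultimately have "pr x > pr s" using pp i s xO by blast
      then show False using \<open>M i b \<le> real (pr s)\<close> x Meq by simp
    qed
    have hb: "h i b = real (card (Up i b))" using nsupp by (simp add: h_def)
    have "Up i a \<subset> Up i b"
    proof
      show "Up i a \<subseteq> Up i b" by (rule Up_sub[OF i a b Rab])
      have "b \<in> Up i b" by (rule inUp[OF i b])
      moreover have "b \<notin> Up i a" using False by (simp add: Up_def)
      ultimately show "Up i a \<noteq> Up i b" by blast
    qed
    then have "card (Up i a) < card (Up i b)" using finUp by (intro psubset_card_mono) auto
    moreover have "h i a \<le> real (card (Up i a))" by (simp add: h_def)
    ultimately have "h i a < h i b" using hb by simp
    then have "h i a / (real (card Os) + 1) < h i b / (real (card Os) + 1)"
      by (intro divide_strict_right_mono) auto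
    then show ?thesis using Meq by (simp add: u_def)
  qed
  then show ?thesis using False by simp
qed

lemma agent_ineq:
  assumes i: "i \<in> I" and p'nn: "\<forall>ob\<in>Os. 0 \<le> p' i ob" and pnn: "\<forall>ob\<in>Os. 0 \<le> p i ob"
    and sd: "sd_geq Os R i (p' i) (p i)"
  shows "(\<Sum>ob\<in>Os. real (pr ob) * p' i ob) \<ge> (\<Sum>ob\<in>Os. real (pr ob) * p i ob) \<and>
         (sd_gt Os R i (p' i) (p i) \<longrightarrow> (\<Sum>ob\<in>Os. real (pr ob) * p' i ob) > (\<Sum>ob\<in>Os. real (pr ob) * p i ob))"
proof -
  define d where "d x = p' i x - p i x" for x
  have L: "(\<Sum>x\<in>Os. u i x * d x) \<ge> 0 \<and>
     ((\<forall>a\<in>Os. 0 < u i a) \<and> (\<forall>a\<in>Os. \<forall>b\<in>Os. R i a b \<and> \<not> R i b a \<longrightarrow> u i b < u i a) \<and>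
       (\<exists>ob\<in>Os. (\<Sum>x\<in>{x\<in>Os. R i x ob}. d x) > 0) \<longrightarrow> (\<Sum>x\<in>Os. u i x * d x) > 0)"
  proof (rule layer[OF finOs])
    show "\<forall>a\<in>Os. \<forall>b\<in>Os. R i a b \<or> R i b a" using tot i by blast
    show "\<forall>a\<in>Os. \<forall>b\<in>Os. \<forall>c\<in>Os. R i a b \<longrightarrow> R i b c \<longrightarrow> R i a c" using trans i by blast
    show "\<forall>a\<in>Os. \<forall>b\<in>Os. R i a b \<longrightarrow> u i b \<le> u i a" using u_mono_strict[OF i] by blast
    show "\<forall>a\<in>Os. 0 \<le> u i a" using u_pos[OF i] by (simp add: less_imp_le)
    show "\<forall>ob\<in>Os. 0 \<le> (\<Sum>x\<in>{x\<in>Os. R i x ob}. d x)"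
      using sd unfolding sd_geq_def d_def by (simp add: sum_subtractf)
  qed
  have E1: "(\<Sum>x\<in>Os. u i x * d x) = (\<Sum>x\<in>Os. u i x * p' i x) - (\<Sum>x\<in>Os. u i x * p i x)"
    by (simp add: d_def right_diff_distrib sum_subtractf)
  have E2: "(\<Sum>x\<in>Os. u i x * p i x) = (\<Sum>x\<in>Os. real (pr x) * p i x)"
  proof (rule sum.cong[OF refl])
    fix x assume x: "x \<in> Os"
    show "u i x * p i x = real (pr x) * p i x"
    proof (cases "p i x > 0")
      case True then show ?thesis using u_supp[OF i x] by simp
    next
      case False then have "p i x = 0" using pnn x by force
      then show ?thesis by simp
    qed
  qed
  have E3: "(\<Sum>x\<in>Os. u i x * p' i x) \<le> (\<Sum>x\<in>Os. real (pr x) * p' i x)"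
    by (rule sum_mono) (use u_le[OF i] p'nn in \<open>auto intro: mult_right_mono\<close>)
  show ?thesis
  proof (intro conjI impI)
    show "(\<Sum>ob\<in>Os. real (pr ob) * p' i ob) \<ge> (\<Sum>ob\<in>Os. real (pr ob) * p i ob)"
      using L E1 E2 E3 by linarith
  next
    assume "sd_gt Os R i (p' i) (p i)"
    then have "\<exists>ob\<in>Os. (\<Sum>x\<in>{x\<in>Os. R i x ob}. d x) > 0"
      unfolding sd_gt_def d_def by (auto simp: sum_subtractf)
    moreover have "\<forall>a\<in>Os. 0 < u i a" using u_pos[OF i] by blast
    moreover have "\<forall>a\<in>Os. \<forall>b\<in>Os. R i a b \<and> \<not> R i b a \<longrightarrow> u i b < u i a"
      using u_mono_strict[OF i] by blast
    ultimately have "(\<Sum>x\<in>Os. u i x * d x) > 0" using L by blast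
    then show "(\<Sum>ob\<in>Os. real (pr ob) * p' i ob) > (\<Sum>ob\<in>Os. real (pr ob) * p i ob)"
      using E1 E2 E3 by linarith
  qed
qed

lemma no_dominate:
  assumes pnn: "\<forall>i\<in>I. \<forall>ob\<in>Os. 0 \<le> p i ob"
    and col: "\<forall>ob\<in>Os. (\<Sum>i\<in>I. p i ob) = q ob"
    and asg: "\<forall>i\<in>I. \<forall>ob\<in>Os. 0 \<le> p' i ob" "\<forall>ob\<in>Os. (\<Sum>i\<in>I. p' i ob) \<le> q ob"
    and dom: "sd_dominates I Os R p' p"
  shows False
proof -
  have sdI: "\<forall>i\<in>I. sd_geq Os R i (p' i) (p i)" and ex: "\<exists>j\<in>I. sd_gt Os R j (p' j) (p j)"
    using dom unfolding sd_dominates_def by blast+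
  have AI: "\<forall>i\<in>I. (\<Sum>ob\<in>Os. real (pr ob) * p' i ob) \<ge> (\<Sum>ob\<in>Os. real (pr ob) * p i ob) \<and>
         (sd_gt Os R i (p' i) (p i) \<longrightarrow> (\<Sum>ob\<in>Os. real (pr ob) * p' i ob) > (\<Sum>ob\<in>Os. real (pr ob) * p i ob))"
    using agent_ineq asg(1) pnn sdI by blast
  have "(\<Sum>i\<in>I. \<Sum>ob\<in>Os. real (pr ob) * p i ob) < (\<Sum>i\<in>I. \<Sum>ob\<in>Os. real (pr ob) * p' i ob)"
  proof (rule sum_strict_mono_ex1[OF finI])
    show "\<forall>i\<in>I. (\<Sum>ob\<in>Os. real (pr ob) * p i ob) \<le> (\<Sum>ob\<in>Os. real (pr ob) * p' i ob)" using AI by blast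
    show "\<exists>i\<in>I. (\<Sum>ob\<in>Os. real (pr ob) * p i ob) < (\<Sum>ob\<in>Os. real (pr ob) * p' i ob)" using AI ex by blast
  qed
  also have "(\<Sum>i\<in>I. \<Sum>ob\<in>Os. real (pr ob) * p' i ob) = (\<Sum>ob\<in>Os. real (pr ob) * (\<Sum>i\<in>I. p' i ob))"
    by (simp add: sum.swap[of _ I] sum_distrib_left)
  also have "\<dots> \<le> (\<Sum>ob\<in>Os. real (pr ob) * q ob)"
    by (rule sum_mono) (use asg(2) in \<open>auto intro: mult_left_mono\<close>)
  also have "\<dots> = (\<Sum>ob\<in>Os. real (pr ob) * (\<Sum>i\<in>I. p i ob))" using col by simp
  also have "\<dots> = (\<Sum>i\<in>I. \<Sum>ob\<in>Os. real (pr ob) * p i ob)"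
    by (simp add: sum.swap[of _ I] sum_distrib_left)
  finally show False by simp
qed

end



theorem proposition1:
  fixes I :: "'i set" and Os :: "'o set" and R :: "'i \<Rightarrow> 'o \<Rightarrow> 'o \<Rightarrow> bool"
    and \<omega> p :: "'i \<Rightarrow> 'o \<Rightarrow> real"
  assumes "fee_problem I Os R \<omega>"
    and "fttc_output I Os R \<omega> p"
  shows "individually_rational I Os R \<omega> p \<and> sd_efficient I Os R \<omega> p"
proof -
  note fee = assms(1)
  obtain n s where s0: "s 0 = (\<omega>, (\<lambda>_ _. 0), Os)" and steps: "\<forall>d<n. fttc_step I Os R (s d) (s (Suc d))"
    and fin: "snd (snd (s n)) = {}" and pdef: "p = fst (snd (s n))"
    using assms(2) unfolding fttc_output_def by blast
  interpret F: frun I Os R \<omega> s n by (unfold_locales) (fact fee, fact s0, fact steps)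
  have inv: "INV I Os R \<omega> (F.W n) (F.P n) (F.D n)" using F.inv_all by simp
  have pnn: "\<forall>i\<in>I. \<forall>ob\<in>Os. 0 \<le> p i ob" using inv pdef unfolding INV_def by blast
  have wz: "\<forall>i\<in>I. \<forall>ob\<in>Os. F.W n i ob = 0" using inv fin unfolding INV_def by auto
  have col0: "\<forall>ob\<in>Os. (\<Sum>i\<in>I. F.P n i ob + F.W n i ob) = quota I \<omega> ob" using inv unfolding INV_def by blast
  have row0: "\<forall>i\<in>I. (\<Sum>ob\<in>Os. F.P n i ob + F.W n i ob) = (\<Sum>ob\<in>Os. \<omega> i ob)" using inv unfolding INV_def by blast
  have sd0: "\<forall>i\<in>I. sd_geq Os R i (\<lambda>ob. F.P n i ob + F.W n i ob) (\<omega> i)" using inv unfolding INV_def by blast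
  have col: "\<forall>ob\<in>Os. (\<Sum>i\<in>I. p i ob) = quota I \<omega> ob"
  proof
    fix ob assume ob: "ob \<in> Os"
    have "(\<Sum>i\<in>I. p i ob) = (\<Sum>i\<in>I. F.P n i ob + F.W n i ob)"
      by (rule sum.cong) (use wz ob pdef in auto)
    then show "(\<Sum>i\<in>I. p i ob) = quota I \<omega> ob" using col0 ob by simp
  qed
  have row: "\<forall>i\<in>I. (\<Sum>ob\<in>Os. p i ob) \<le> 1"
  proof
    fix i assume i: "i \<in> I"
    have "(\<Sum>ob\<in>Os. p i ob) = (\<Sum>ob\<in>Os. F.P n i ob + F.W n i ob)"
      by (rule sum.cong) (use wz i pdef in auto)
    also have "\<dots> = (\<Sum>ob\<in>Os. \<omega> i ob)" using row0 i by simp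
    also have "\<dots> \<le> 1" using fee i unfolding fee_problem_def by blast
    finally show "(\<Sum>ob\<in>Os. p i ob) \<le> 1" .
  qed
  have IR: "individually_rational I Os R \<omega> p"
    unfolding individually_rational_def
  proof
    fix i assume i: "i \<in> I"
    have "sd_geq Os R i (\<lambda>ob. F.P n i ob + F.W n i ob) (\<omega> i)" using sd0 i by blast
    moreover have "\<And>A. A \<subseteq> Os \<Longrightarrow> (\<Sum>ob\<in>A. F.P n i ob + F.W n i ob) = (\<Sum>ob\<in>A. p i ob)"
      by (rule sum.cong) (use wz i pdef in auto)
    ultimately show "sd_geq Os R i (p i) (\<omega> i)" unfolding sd_geq_def by auto
  qed
  have asg: "is_assignment I Os \<omega> p" unfolding is_assignment_def using pnn col row by simp
  have finI: "finite I" and finOs: "finite Os"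
    and tot: "\<forall>i\<in>I. \<forall>a\<in>Os. \<forall>b\<in>Os. R i a b \<or> R i b a"
    and tr: "\<forall>i\<in>I. \<forall>a\<in>Os. \<forall>b\<in>Os. \<forall>c\<in>Os. R i a b \<longrightarrow> R i b c \<longrightarrow> R i a c"
    using fee unfolding fee_problem_def by blast+
  interpret E: effctx I Os R p "\<lambda>ob. 1 + card (F.dead ob)"
  proof (unfold_locales)
    show "finite I" "finite Os" by (fact finI, fact finOs)
    show "\<forall>i\<in>I. \<forall>a\<in>Os. \<forall>b\<in>Os. R i a b \<or> R i b a" by (fact tot)
    show "\<forall>i\<in>I. \<forall>a\<in>Os. \<forall>b\<in>Os. \<forall>c\<in>Os. R i a b \<longrightarrow> R i b c \<longrightarrow> R i a c" by (fact tr)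
    show "\<forall>ob\<in>Os. 1 \<le> 1 + card (F.dead ob)" by simp
    show "\<forall>i\<in>I. \<forall>x\<in>Os. 0 < p i x \<longrightarrow>
      (\<forall>ob\<in>Os. R i ob x \<longrightarrow> 1 + card (F.dead x) \<le> 1 + card (F.dead ob) \<and>
        (\<not> R i x ob \<longrightarrow> 1 + card (F.dead x) < 1 + card (F.dead ob)))"
    proof (intro ballI impI)
      fix i x ob assume i: "i \<in> I" and x: "x \<in> Os" and px: "0 < p i x" and ob: "ob \<in> Os" and R: "R i ob x"
      have "F.price ob \<ge> F.price x \<and> (\<not> R i x ob \<longrightarrow> F.price ob > F.price x)"
        using F.price_prop[OF i x _ ob R] px pdef by simp
      then show "1 + card (F.dead x) \<le> 1 + card (F.dead ob) \<and>
        (\<not> R i x ob \<longrightarrow> 1 + card (F.dead x) < 1 + card (F.dead ob))"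
        unfolding F.price_def by (simp only: of_nat_le_iff of_nat_less_iff) simp
    qed
  qed
  have eff: "\<not> (\<exists>p'. is_assignment I Os \<omega> p' \<and> sd_dominates I Os R p' p)"
  proof
    assume "\<exists>p'. is_assignment I Os \<omega> p' \<and> sd_dominates I Os R p' p"
    then obtain p' where a: "is_assignment I Os \<omega> p'" and d: "sd_dominates I Os R p' p" by blast
    have "\<forall>i\<in>I. \<forall>ob\<in>Os. 0 \<le> p' i ob" "\<forall>ob\<in>Os. (\<Sum>i\<in>I. p' i ob) \<le> quota I \<omega> ob"
      using a unfolding is_assignment_def by blast+
    then show False using E.no_dominate[OF pnn col _ _ d] by blast
  qed
  show ?thesis using IR asg eff unfolding sd_efficient_def by blast
qed



end
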